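(* Let $a,\rho\in(0,1)$ and $m\ge 3$. Then: 1) $\Gamma_\rho(a)=\Lambda^{(m)}_\rho(a)$ (in particular the maximum in $\Lambda^{(m)}_\rho(a)$ is attained and its value does not depend on $m\ge3$). 2) Every optimal solution of the problem defining $\Gamma_\rho(a)$ (equivalently of the problem defining $\Lambda^{(m)}_\rho(a)$, with $(S,Z)$ having joint law $P(S=s,Z=z_{s,i})=p_{s,i}$) satisfies $\mathbb E[Z^2]=\mathbb E[SZ]$. 3) Every optimal solution $(z_{s,i},p_{s,i})$ of the problem defining $\Lambda^{(m)}_\rho(a)$ satisfies $z_{1-a,j}\ge z_{-a,i}+\tfrac12$ for all $i,j\in[m]$ with $z_{-a,i}>-a/\rho$ and $z_{1-a,j}<(1-a)/\rho$; moreover there exist $i\in[m]$ with $z_{-a,i}>-a/\rho$ and $j\in[m]$ with $z_{1-a,j}<(1-a)/\rho$. 4) The linear independence constraint qualification (LICQ) holds at every optimal solution of the problem defining $\Lambda^{(m)}_\rho(a)$, i.e. the gradients (with respect to all variables $(z_{s,i},p_{s,i})$) of the active inequality constraints and of the equality constraints are linearly independent there.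
   Context: Let $\Phi:[0,1]\to\mathbb R$ be continuous and strictly convex. Let $\mathcal S=\{-a,1-a\}$ and $P_S(-a)=1-a$, $P_S(1-a)=a$. $\Gamma_\rho(a):=\sup_{P_{Z|S}}\mathbb E[\Phi(a+\rho Z)]$ subject to $0\le a+\rho Z\le1$ a.s., $\mathbb E[Z]=0$, $\mathbb E[Z^2]\le\mathbb E[SZ]$, where $(S,Z)\sim P_SP_{Z|S}$ and the supremum is over conditional probability mass functions. For $m\ge3$, $$\Lambda^{(m)}_\rho(a):=\max\sum_{(s,i)\in\mathcal S\times[m]}p_{s,i}\Phi(a+\rho z_{s,i})$$ over $z_{s,i}\in\mathbb R$, $p_{s,i}>0$ ($(s,i)\in\mathcal S\times[m]$) subject to: $0\le a+\rho z_{s,i}\le1$ for all $(s,i)$; $\sum_{i\in[m]}p_{s,i}=P_S(s)$ for each $s\in\mathcal S$; $\sum_{s,i}p_{s,i}z_{s,i}=0$; $\sum_{s,i}p_{s,i}(z_{s,i}^2-sz_{s,i})\le0$. Here $[m]=\{1,\dots,m\}$. *)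

theory Defs
  imports "HOL-Probability.Probability"
begin

definition strictly_convex_on :: "real set \<Rightarrow> (real \<Rightarrow> real) \<Rightarrow> bool" where
  "strictly_convex_on A f \<longleftrightarrow>
     (\<forall>x\<in>A. \<forall>y\<in>A. \<forall>t::real. x \<noteq> y \<and> 0 < t \<and> t < 1 \<longrightarrow>
        f ((1 - t) * x + t * y) < (1 - t) * f x + t * f y)"

definition Sset :: "real \<Rightarrow> real set" where
  "Sset a = {-a, 1 - a}"

definition PS :: "real \<Rightarrow> real \<Rightarrow> real" where
  "PS a s = (if s = -a then 1 - a else a)"

(* E[f(S,Z)] for (S,Z) ~ P_S P_{Z|S} *)
definition jointE :: "real \<Rightarrow> (real \<Rightarrow> real pmf) \<Rightarrow> (real \<Rightarrow> real \<Rightarrow> real) \<Rightarrow> real" where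
  "jointE a Q f = (\<Sum>s\<in>Sset a. PS a s * measure_pmf.expectation (Q s) (f s))"

definition gamma_feasible :: "real \<Rightarrow> real \<Rightarrow> (real \<Rightarrow> real pmf) \<Rightarrow> bool" where
  "gamma_feasible a \<rho> Q \<longleftrightarrow>
     (\<forall>s\<in>Sset a. \<forall>z\<in>set_pmf (Q s). 0 \<le> a + \<rho> * z \<and> a + \<rho> * z \<le> 1) \<and>
     jointE a Q (\<lambda>s z. z) = 0 \<and>
     jointE a Q (\<lambda>s z. z\<^sup>2) \<le> jointE a Q (\<lambda>s z. s * z)"

definition gamma_obj :: "(real \<Rightarrow> real) \<Rightarrow> real \<Rightarrow> real \<Rightarrow> (real \<Rightarrow> real pmf) \<Rightarrow> real" where
  "gamma_obj \<Phi> a \<rho> Q = jointE a Q (\<lambda>s z. \<Phi> (a + \<rho> * z))"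

definition Gamma :: "(real \<Rightarrow> real) \<Rightarrow> real \<Rightarrow> real \<Rightarrow> real" where
  "Gamma \<Phi> a \<rho> = Sup {gamma_obj \<Phi> a \<rho> Q | Q. gamma_feasible a \<rho> Q}"

definition gamma_optimal :: "(real \<Rightarrow> real) \<Rightarrow> real \<Rightarrow> real \<Rightarrow> (real \<Rightarrow> real pmf) \<Rightarrow> bool" where
  "gamma_optimal \<Phi> a \<rho> Q \<longleftrightarrow> gamma_feasible a \<rho> Q \<and>
     (\<forall>Q'. gamma_feasible a \<rho> Q' \<longrightarrow> gamma_obj \<Phi> a \<rho> Q' \<le> gamma_obj \<Phi> a \<rho> Q)"

definition lam_feasible :: "real \<Rightarrow> real \<Rightarrow> nat \<Rightarrow> (real \<Rightarrow> nat \<Rightarrow> real) \<Rightarrow> (real \<Rightarrow> nat \<Rightarrow> real) \<Rightarrow> bool" where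
  "lam_feasible a \<rho> m z p \<longleftrightarrow>
     (\<forall>s\<in>Sset a. \<forall>i\<in>{1..m}. 0 \<le> a + \<rho> * z s i \<and> a + \<rho> * z s i \<le> 1 \<and> 0 < p s i) \<and>
     (\<forall>s\<in>Sset a. (\<Sum>i\<in>{1..m}. p s i) = PS a s) \<and>
     (\<Sum>s\<in>Sset a. \<Sum>i\<in>{1..m}. p s i * z s i) = 0 \<and>
     (\<Sum>s\<in>Sset a. \<Sum>i\<in>{1..m}. p s i * ((z s i)\<^sup>2 - s * z s i)) \<le> 0"

definition lam_obj :: "(real \<Rightarrow> real) \<Rightarrow> real \<Rightarrow> real \<Rightarrow> nat \<Rightarrow> (real \<Rightarrow> nat \<Rightarrow> real) \<Rightarrow> (real \<Rightarrow> nat \<Rightarrow> real) \<Rightarrow> real" where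
  "lam_obj \<Phi> a \<rho> m z p = (\<Sum>s\<in>Sset a. \<Sum>i\<in>{1..m}. p s i * \<Phi> (a + \<rho> * z s i))"

definition Lambda :: "(real \<Rightarrow> real) \<Rightarrow> real \<Rightarrow> real \<Rightarrow> nat \<Rightarrow> real" where
  "Lambda \<Phi> a \<rho> m = Sup {lam_obj \<Phi> a \<rho> m z p | z p. lam_feasible a \<rho> m z p}"

definition lam_optimal :: "(real \<Rightarrow> real) \<Rightarrow> real \<Rightarrow> real \<Rightarrow> nat \<Rightarrow> (real \<Rightarrow> nat \<Rightarrow> real) \<Rightarrow> (real \<Rightarrow> nat \<Rightarrow> real) \<Rightarrow> bool" where
  "lam_optimal \<Phi> a \<rho> m z p \<longleftrightarrow> lam_feasible a \<rho> m z p \<and>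
     (\<forall>z' p'. lam_feasible a \<rho> m z' p' \<longrightarrow> lam_obj \<Phi> a \<rho> m z' p' \<le> lam_obj \<Phi> a \<rho> m z p)"

(* Variable vector: x (False, s, i) = z_{s,i},  x (True, s, i) = p_{s,i}. *)
definition lam_vars :: "real \<Rightarrow> nat \<Rightarrow> (bool \<times> real \<times> nat) set" where
  "lam_vars a m = UNIV \<times> Sset a \<times> {1..m}"

definition pack :: "(real \<Rightarrow> nat \<Rightarrow> real) \<Rightarrow> (real \<Rightarrow> nat \<Rightarrow> real) \<Rightarrow> (bool \<times> real \<times> nat \<Rightarrow> real)" where
  "pack z p = (\<lambda>(b, s, i). if b then p s i else z s i)"

(* constraints: inequalities g \<le> 0 (Lo, Up, Second) and equalities h = 0 (EqP, Mean) *)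
datatype constr = Lo real nat | Up real nat | EqP real | Mean | Second

fun cfun :: "real \<Rightarrow> real \<Rightarrow> nat \<Rightarrow> constr \<Rightarrow> (bool \<times> real \<times> nat \<Rightarrow> real) \<Rightarrow> real" where
  "cfun a \<rho> m (Lo s i) x = - (a + \<rho> * x (False, s, i))"
| "cfun a \<rho> m (Up s i) x = a + \<rho> * x (False, s, i) - 1"
| "cfun a \<rho> m (EqP s) x = (\<Sum>i\<in>{1..m}. x (True, s, i)) - PS a s"
| "cfun a \<rho> m Mean x = (\<Sum>s\<in>Sset a. \<Sum>i\<in>{1..m}. x (True, s, i) * x (False, s, i))"
| "cfun a \<rho> m Second x =
     (\<Sum>s\<in>Sset a. \<Sum>i\<in>{1..m}. x (True, s, i) * ((x (False, s, i))\<^sup>2 - s * x (False, s, i)))"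

definition equality_constrs :: "real \<Rightarrow> constr set" where
  "equality_constrs a = {EqP s | s. s \<in> Sset a} \<union> {Mean}"

definition inequality_constrs :: "real \<Rightarrow> nat \<Rightarrow> constr set" where
  "inequality_constrs a m = {Lo s i | s i. s \<in> Sset a \<and> i \<in> {1..m}}
      \<union> {Up s i | s i. s \<in> Sset a \<and> i \<in> {1..m}} \<union> {Second}"

definition active_constrs :: "real \<Rightarrow> real \<Rightarrow> nat \<Rightarrow> (bool \<times> real \<times> nat \<Rightarrow> real) \<Rightarrow> constr set" where
  "active_constrs a \<rho> m x =
     {c \<in> inequality_constrs a m. cfun a \<rho> m c x = 0} \<union> equality_constrs a"

definition partial :: "((bool \<times> real \<times> nat \<Rightarrow> real) \<Rightarrow> real) \<Rightarrow> (bool \<times> real \<times> nat \<Rightarrow> real)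
                        \<Rightarrow> (bool \<times> real \<times> nat) \<Rightarrow> real" where
  "partial F x v = deriv (\<lambda>t. F (x(v := t))) (x v)"

definition LICQ :: "real \<Rightarrow> real \<Rightarrow> nat \<Rightarrow> (bool \<times> real \<times> nat \<Rightarrow> real) \<Rightarrow> bool" where
  "LICQ a \<rho> m x \<longleftrightarrow>
     (\<forall>c :: constr \<Rightarrow> real.
        (\<forall>v\<in>lam_vars a m. (\<Sum>k\<in>active_constrs a \<rho> m x. c k * partial (cfun a \<rho> m k) x v) = 0)
        \<longrightarrow> (\<forall>k\<in>active_constrs a \<rho> m x. c k = 0))"

end

theory Submission
  imports Defs
begin


locale setting =
  fixes \<Phi> :: "real \<Rightarrow> real" and a \<rho> :: real
  assumes cont: "continuous_on {0..1} \<Phi>"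
    and sconv: "strictly_convex_on {0..1} \<Phi>"
    and a0: "0 < a" and a1: "a < 1" and r0: "0 < \<rho>" and r1: "\<rho> < 1"
begin

definition "L = -a/\<rho>"
definition "U = (1-a)/\<rho>"
definition "\<phi> z = \<Phi> (a + \<rho>*z)"
definition kk :: "real \<Rightarrow> real \<times> real \<times> real" where "kk z = (z, z^2, \<phi> z)"
definition "KK = kk ` {L..U}"
definition "CC = convex hull KK"

lemma LU_iff: "z \<in> {L..U} \<longleftrightarrow> 0 \<le> a + \<rho>*z \<and> a + \<rho>*z \<le> 1"
  using r0 by (auto simp: L_def U_def field_simps)

lemma LU: "L < 0" "0 < U" "L < U"
  using a0 a1 r0 by (auto simp: L_def U_def field_simps)

lemma Phi_conv:
  assumes "x \<in> {0..1}" "y \<in> {0..1}" "0 \<le> t" "t \<le> 1"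
  shows "\<Phi> ((1-t)*x + t*y) \<le> (1-t)*\<Phi> x + t*\<Phi> y"
proof (cases "x = y \<or> t = 0 \<or> t = 1")
  case True
  then show ?thesis by (auto simp: algebra_simps)
next
  case False
  then have "0 < t" "t < 1" using assms by auto
  then show ?thesis using sconv assms False unfolding strictly_convex_on_def
    by (meson less_imp_le)
qed

lemma phi_conv:
  assumes "x \<in> {L..U}" "y \<in> {L..U}" "0 \<le> t" "t \<le> 1"
  shows "\<phi> ((1-t)*x + t*y) \<le> (1-t)*\<phi> x + t*\<phi> y"
proof -
  have e: "a + \<rho>*((1-t)*x + t*y) = (1-t)*(a+\<rho>*x) + t*(a+\<rho>*y)" by (simp add: algebra_simps)
  show ?thesis unfolding \<phi>_def e
    by (rule Phi_conv) (use assms LU_iff in auto)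
qed

lemma phi_strict:
  assumes "x \<in> {L..U}" "y \<in> {L..U}" "0 < t" "t < 1" "x \<noteq> y"
  shows "\<phi> ((1-t)*x + t*y) < (1-t)*\<phi> x + t*\<phi> y"
proof -
  have e: "a + \<rho>*((1-t)*x + t*y) = (1-t)*(a+\<rho>*x) + t*(a+\<rho>*y)" by (simp add: algebra_simps)
  have "a+\<rho>*x \<noteq> a+\<rho>*y" using assms r0 by auto
  then show ?thesis unfolding \<phi>_def e using sconv assms LU_iff unfolding strictly_convex_on_def
    by auto
qed

lemma phi_cont: "continuous_on {L..U} \<phi>"
proof -
  have "continuous_on {L..U} (\<Phi> \<circ> (\<lambda>z. a + \<rho>*z))"
    by (rule continuous_on_compose) (auto intro!: continuous_intros continuous_on_subset[OF cont] simp: LU_iff[simplified])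
  then show ?thesis by (simp add: \<phi>_def o_def)
qed

lemma kk_cont: "continuous_on {L..U} kk"
  unfolding kk_def by (intro continuous_intros phi_cont)

lemma compact_KK: "compact KK"
  unfolding KK_def by (rule compact_continuous_image[OF kk_cont]) simp

lemma compact_CC: "compact CC"
  unfolding CC_def by (rule compact_convex_hull[OF compact_KK])

lemma convex_CC: "convex CC"
  unfolding CC_def by simp

lemma KK_CC: "KK \<subseteq> CC"
  unfolding CC_def by (rule hull_subset)

lemma kk_CC: "z \<in> {L..U} \<Longrightarrow> kk z \<in> CC"
  using KK_CC KK_def by auto

lemma kk_fst: "x \<in> KK \<Longrightarrow> kk (fst x) = x" "x \<in> KK \<Longrightarrow> fst x \<in> {L..U}"
  unfolding KK_def kk_def by auto

lemma CC_fst: assumes "u \<in> CC" shows "L \<le> fst u \<and> fst u \<le> U"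
proof -
  have "convex {x::real\<times>real\<times>real. L \<le> fst x \<and> fst x \<le> U}"
    unfolding convex_def
  proof (intro ballI allI impI, simp, intro conjI)
    fix x y :: "real\<times>real\<times>real" and c d :: real
    assume h: "L \<le> fst x \<and> fst x \<le> U" "L \<le> fst y \<and> fst y \<le> U" "0 \<le> c" "0 \<le> d" "c + d = 1"
    have "c * L \<le> c * fst x" "d * L \<le> d * fst y" "c * fst x \<le> c * U" "d * fst y \<le> d * U"
      using h by (auto intro: mult_left_mono)
    moreover have "c * L + d * L = L" "c * U + d * U = U" using h(5) by (metis distrib_right mult_1)+
    ultimately show "L \<le> c * fst x + d * fst y" "c * fst x + d * fst y \<le> U" by linarith+
  qed
  moreover have "KK \<subseteq> {x. L \<le> fst x \<and> fst x \<le> U}" unfolding KK_def kk_def by auto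
  ultimately have "CC \<subseteq> {x. L \<le> fst x \<and> fst x \<le> U}" unfolding CC_def by (simp add: hull_minimal)
  then show ?thesis using assms by auto
qed

lemma replace_atom:
  assumes "finite I" "\<And>i. i \<in> I \<Longrightarrow> 0 \<le> w i" "sum w I = 1" "\<And>i. i \<in> I \<Longrightarrow> x i \<in> CC"
    "i0 \<in> I" "Y \<in> CC"
  shows "(\<Sum>i\<in>I. w i *\<^sub>R x i) + w i0 *\<^sub>R (Y - x i0) \<in> CC"
proof -
  have "(\<Sum>i\<in>I. w i *\<^sub>R (x(i0:=Y)) i) = (\<Sum>i\<in>I. w i *\<^sub>R x i + (if i = i0 then w i0 *\<^sub>R (Y - x i0) else 0))"
    by (rule sum.cong) (auto simp: algebra_simps)
  also have "\<dots> = (\<Sum>i\<in>I. w i *\<^sub>R x i) + w i0 *\<^sub>R (Y - x i0)"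
    using assms(1,5) by (simp add: sum.distrib)
  finally have e: "(\<Sum>i\<in>I. w i *\<^sub>R (x(i0:=Y)) i) = (\<Sum>i\<in>I. w i *\<^sub>R x i) + w i0 *\<^sub>R (Y - x i0)" .
  have "(\<Sum>i\<in>I. w i *\<^sub>R (x(i0:=Y)) i) \<in> CC"
    by (rule convex_sum[OF assms(1) convex_CC assms(3)]) (use assms in auto)
  then show ?thesis using e by simp
qed

lemma kk_coords: "fst (kk z) = z" "fst (snd (kk z)) = z^2" "snd (snd (kk z)) = \<phi> z"
  by (auto simp: kk_def)

lemma sum_coords:
  fixes x :: "'b \<Rightarrow> real \<times> real \<times> real"
  shows "fst (\<Sum>i\<in>I. w i *\<^sub>R x i) = (\<Sum>i\<in>I. w i * fst (x i))"
    "fst (snd (\<Sum>i\<in>I. w i *\<^sub>R x i)) = (\<Sum>i\<in>I. w i * fst (snd (x i)))"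
    "snd (snd (\<Sum>i\<in>I. w i *\<^sub>R x i)) = (\<Sum>i\<in>I. w i * snd (snd (x i)))"
  by (simp_all add: fst_sum snd_sum)

lemma spread:
  assumes "u \<in> CC"
  shows "fst (snd u) = (L+U)*fst u - L*U \<or>
    (\<forall>\<epsilon>>0. \<exists>u'\<in>CC. fst u' = fst u \<and> fst (snd u) \<le> fst (snd u') \<and>
        fst (snd u') \<le> fst (snd u) + \<epsilon> \<and> snd (snd u') > snd (snd u))"
proof -
  obtain S w where S: "finite S" "S \<subseteq> KK" "\<forall>x\<in>S. 0 \<le> w x" "sum w S = 1"
    and ue: "(\<Sum>v\<in>S. w v *\<^sub>R v) = u"
    using assms unfolding CC_def convex_hull_explicit by blast
  show ?thesis
  proof (cases "\<forall>x\<in>S. 0 < w x \<longrightarrow> fst x = L \<or> fst x = U")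
    case True
    have "\<And>x. x \<in> S \<Longrightarrow> w x * fst (snd x) = w x * ((L+U) * fst x - L*U)"
    proof -
      fix x assume x: "x \<in> S"
      show "w x * fst (snd x) = w x * ((L+U) * fst x - L*U)"
      proof (cases "w x = 0")
        case False
        then have "fst x = L \<or> fst x = U" using True x S(3) by force
        moreover have "fst (snd x) = (fst x)^2" using kk_fst(1)[of x] x S(2) kk_coords(2)[of "fst x"] by auto
        ultimately show ?thesis by (auto simp: power2_eq_square algebra_simps)
      qed simp
    qed
    then have "(\<Sum>x\<in>S. w x * fst (snd x)) = (\<Sum>x\<in>S. w x * ((L+U) * fst x - L*U))"
      by (rule sum.cong[OF refl])
    then have "fst (snd u) = (\<Sum>x\<in>S. w x * ((L+U) * fst x - L*U))"
      using ue[symmetric] by (simp add: sum_coords[of w "\<lambda>v. v", simplified])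
    also have "\<dots> = (L+U) * (\<Sum>x\<in>S. w x * fst x) - L*U * sum w S"
      by (simp add: algebra_simps sum_subtractf sum_distrib_left sum_distrib_right)
    also have "\<dots> = (L+U)*fst u - L*U"
      using ue[symmetric] S(4) by (simp add: sum_coords[of w "\<lambda>v. v", simplified])
    finally show ?thesis by simp
  next
    case False
    then obtain x0 where x0: "x0 \<in> S" "0 < w x0" "fst x0 \<noteq> L" "fst x0 \<noteq> U" by blast
    define z0 where "z0 = fst x0"
    define w0 where "w0 = w x0"
    have x0k: "x0 = kk z0" using kk_fst(1)[of x0] x0 S(2) z0_def by auto
    have z0: "L < z0" "z0 < U" using kk_fst(2)[of x0] x0 S(2) z0_def by force+
    have "\<forall>\<epsilon>>0. \<exists>u'\<in>CC. fst u' = fst u \<and> fst (snd u) \<le> fst (snd u') \<and>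
        fst (snd u') \<le> fst (snd u) + \<epsilon> \<and> snd (snd u') > snd (snd u)"
    proof (intro allI impI)
      fix \<epsilon> :: real assume e: "\<epsilon> > 0"
      define \<delta> where "\<delta> = min (min (z0 - L) (U - z0)) (min 1 (\<epsilon>/w0))"
      have d: "0 < \<delta>" "\<delta> \<le> z0 - L" "\<delta> \<le> U - z0" "\<delta> \<le> 1" "\<delta> \<le> \<epsilon>/w0"
        using z0 e x0 by (auto simp: \<delta>_def w0_def)
      have w0: "0 < w0" using x0 w0_def by auto
      have dd: "w0 * \<delta>^2 \<le> \<epsilon>"
      proof -
        have "\<delta>^2 \<le> \<delta>" using d by (simp add: power2_eq_square mult_left_le_one_le)
        then have "w0 * \<delta>^2 \<le> w0 * \<delta>" using w0 by simp
        also have "\<dots> \<le> w0 * (\<epsilon>/w0)" using d w0 by (intro mult_left_mono) auto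
        finally show ?thesis using w0 by simp
      qed
      define Y where "Y = (1/2) *\<^sub>R kk (z0+\<delta>) + (1/2) *\<^sub>R kk (z0-\<delta>)"
      have zpm: "z0+\<delta> \<in> {L..U}" "z0-\<delta> \<in> {L..U}" using d z0 by auto
      have Y: "Y \<in> CC" unfolding Y_def
        using convex_CC[unfolded convex_def] kk_CC[OF zpm(1)] kk_CC[OF zpm(2)] by simp
      define u' where "u' = (\<Sum>v\<in>S. w v *\<^sub>R v) + w0 *\<^sub>R (Y - kk z0)"
      have u'C: "u' \<in> CC" unfolding u'_def w0_def x0k[symmetric]
        by (rule replace_atom[of S w "\<lambda>v. v", OF S(1) _ S(4) _ x0(1) Y]) (use S KK_CC in auto)
      have mid: "(1 - 1/2) * (z0+\<delta>) + (1/2) * (z0-\<delta>) = z0" by (simp add: field_simps)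
      have strict: "\<phi> z0 < (1/2) * \<phi> (z0+\<delta>) + (1/2) * \<phi> (z0-\<delta>)"
        using phi_strict[OF zpm(1) zpm(2), of "1/2"] d unfolding mid by simp
      have c1: "fst u' = fst u"
        using ue by (simp add: u'_def Y_def kk_def field_simps)
      have c2: "fst (snd u') = fst (snd u) + w0 * \<delta>^2"
        using ue by (simp add: u'_def Y_def kk_def field_simps power2_eq_square)
      have c3: "snd (snd u') = snd (snd u) + w0 * ((1/2) * \<phi> (z0+\<delta>) + (1/2) * \<phi> (z0-\<delta>) - \<phi> z0)"
        using ue by (simp add: u'_def Y_def kk_def field_simps)
      show "\<exists>u'\<in>CC. fst u' = fst u \<and> fst (snd u) \<le> fst (snd u') \<and>
        fst (snd u') \<le> fst (snd u) + \<epsilon> \<and> snd (snd u') > snd (snd u)"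
        using u'C c1 c2 c3 dd w0 strict by (intro bexI[of _ u']) auto
    qed
    then show ?thesis by blast
  qed
qed

type_synonym p3 = "real \<times> real \<times> real"

definition hcon :: "p3 \<times> p3 \<Rightarrow> real" where
  "hcon w = (1-a)*(fst (snd (fst w)) + a*fst (fst w)) + a*(fst (snd (snd w)) - (1-a)*fst (snd w))"
definition hobj :: "p3 \<times> p3 \<Rightarrow> real" where
  "hobj w = (1-a)* snd (snd (fst w)) + a* snd (snd (snd w))"
definition hfeas :: "p3 \<times> p3 \<Rightarrow> bool" where
  "hfeas w \<longleftrightarrow> fst w \<in> CC \<and> snd w \<in> CC \<and> (1-a)*fst (fst w) + a*fst (snd w) = 0 \<and> hcon w \<le> 0"

lemma hmax_exists: "\<exists>w. hfeas w \<and> (\<forall>w'. hfeas w' \<longrightarrow> hobj w' \<le> hobj w)"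
proof -
  define F where "F = (CC \<times> CC) \<inter> {w. (1-a)*fst (fst w) + a*fst (snd w) = 0} \<inter> {w. hcon w \<le> 0}"
  have Fe: "F = {w. hfeas w}" unfolding F_def hfeas_def by auto
  have "compact (CC \<times> CC)" using compact_CC by (simp add: compact_Times)
  moreover have "closed {w::p3\<times>p3. (1-a)*fst (fst w) + a*fst (snd w) = 0}"
    by (intro closed_Collect_eq continuous_intros)
  moreover have "closed {w::p3\<times>p3. hcon w \<le> 0}"
    unfolding hcon_def by (intro closed_Collect_le continuous_intros)
  ultimately have cF: "compact F" unfolding F_def by (intro compact_Int_closed)
  have "kk 0 \<in> CC" using kk_CC LU by auto
  then have "(kk 0, kk 0) \<in> F" unfolding Fe hfeas_def hcon_def by (simp add: kk_def)
  then have ne: "F \<noteq> {}" by auto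
  have "continuous_on F hobj" unfolding hobj_def by (intro continuous_intros)
  from continuous_attains_sup[OF cF ne this] show ?thesis unfolding Fe by auto
qed

definition "wopt = (SOME w. hfeas w \<and> (\<forall>w'. hfeas w' \<longrightarrow> hobj w' \<le> hobj w))"
definition "M = hobj wopt"

lemma wopt: "hfeas wopt" "\<And>w'. hfeas w' \<Longrightarrow> hobj w' \<le> M"
  using someI_ex[OF hmax_exists] unfolding wopt_def[symmetric] M_def by auto

lemma endpoints_infeasible:
  assumes "hfeas w" "fst (snd (fst w)) = (L+U)*fst (fst w) - L*U"
    "fst (snd (snd w)) = (L+U)*fst (snd w) - L*U"
  shows False
proof -
  define mu where "mu = fst (fst w)"
  define mv where "mv = fst (snd w)"
  have mean: "(1-a)*mu + a*mv = 0" using assms(1) unfolding hfeas_def mu_def mv_def by auto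
  have b: "L \<le> mu" "mv \<le> U" using CC_fst assms(1) unfolding hfeas_def mu_def mv_def by auto
  have "hcon w = (L+U)*((1-a)*mu + a*mv) - L*U + a*(1-a)*(mu - mv)"
    unfolding hcon_def assms(2,3) mu_def[symmetric] mv_def[symmetric] by (simp add: algebra_simps)
  also have "\<dots> = - L*U + a*(1-a)*(mu - mv)" using mean by simp
  finally have h: "hcon w = - L*U + a*(1-a)*(mu - mv)" .
  have "a*(1-a)*(L - U) \<le> a*(1-a)*(mu - mv)" using b a0 a1 by (intro mult_left_mono) auto
  moreover have "L - U = -1/\<rho>" "-L*U = a*(1-a)/\<rho>^2" using r0 by (auto simp: L_def U_def field_simps power2_eq_square)
  ultimately have "hcon w \<ge> a*(1-a)/\<rho>^2 - a*(1-a)/\<rho>" using h by simp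
  moreover have "a*(1-a)/\<rho> < a*(1-a)/\<rho>^2"
  proof -
    have "1/\<rho> < 1/\<rho>^2" using r0 r1 by (simp add: field_simps power2_eq_square)
    then show ?thesis using a0 a1 by (simp add: divide_inverse mult_strict_left_mono)
  qed
  ultimately have "hcon w > 0" by linarith
  then show False using assms(1) unfolding hfeas_def by auto
qed

lemma tight:
  assumes "hfeas w" "hobj w \<ge> M"
  shows "hcon w = 0"
proof (rule ccontr)
  assume "hcon w \<noteq> 0"
  then have neg: "hcon w < 0" using assms(1) unfolding hfeas_def by auto
  obtain u v where w: "w = (u,v)" by (cases w)
  have uC: "u \<in> CC" and vC: "v \<in> CC" using assms(1) w unfolding hfeas_def by auto
  show False
  proof (cases "fst (snd u) = (L+U)*fst u - L*U")
    case tu: True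
    show False
    proof (cases "fst (snd v) = (L+U)*fst v - L*U")
      case True
      then show False using endpoints_infeasible[OF assms(1)] tu w by auto
    next
      case False
      with spread[OF vC] have sp: "\<forall>\<epsilon>>0. \<exists>u'\<in>CC. fst u' = fst v \<and> fst (snd v) \<le> fst (snd u') \<and>
        fst (snd u') \<le> fst (snd v) + \<epsilon> \<and> snd (snd u') > snd (snd v)" by blast
      have "- hcon w / a > 0" using neg a0 by (simp add: divide_neg_pos)
      from sp[rule_format, OF this] obtain v' where v': "v' \<in> CC" "fst v' = fst v"
        "fst (snd v') \<le> fst (snd v) + - hcon w / a" "snd (snd v') > snd (snd v)" by blast
      have "a * fst (snd v') \<le> a * fst (snd v) - hcon w"
        using mult_left_mono[OF v'(3), of a] a0 by (simp add: algebra_simps)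
      moreover have "hcon (u,v') = hcon w + a*(fst (snd v') - fst (snd v))"
        using v'(2) by (simp add: hcon_def w algebra_simps)
      ultimately have "hfeas (u, v')" using assms(1) w v' unfolding hfeas_def by (auto simp: algebra_simps)
      moreover have "hobj (u,v') > hobj w" using v'(4) a0 w unfolding hobj_def by simp
      ultimately show False using wopt(2) assms(2) by fastforce
    qed
  next
    case False
    with spread[OF uC] have sp: "\<forall>\<epsilon>>0. \<exists>u'\<in>CC. fst u' = fst u \<and> fst (snd u) \<le> fst (snd u') \<and>
      fst (snd u') \<le> fst (snd u) + \<epsilon> \<and> snd (snd u') > snd (snd u)" by blast
    have "- hcon w / (1-a) > 0" using neg a1 by (simp add: divide_neg_pos)
    from sp[rule_format, OF this] obtain u' where u': "u' \<in> CC" "fst u' = fst u"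
      "fst (snd u') \<le> fst (snd u) + - hcon w / (1-a)" "snd (snd u') > snd (snd u)" by blast
    have "(1-a) * fst (snd u') \<le> (1-a) * (fst (snd u) + - hcon w / (1-a))"
      using mult_left_mono[OF u'(3), of "1-a"] a1 by simp
    also have "\<dots> = (1-a) * fst (snd u) - hcon w" using a1 by (simp add: field_simps)
    finally have "(1-a) * fst (snd u') \<le> (1-a) * fst (snd u) - hcon w" .
    moreover have "hcon (u',v) = hcon w + (1-a)*(fst (snd u') - fst (snd u))"
      using u'(2) by (simp add: hcon_def w algebra_simps)
    ultimately have "hfeas (u', v)" using assms(1) w u' unfolding hfeas_def by (auto simp: algebra_simps)
    moreover have "hobj (u',v) > hobj w" using u'(4) a1 w unfolding hobj_def by simp
    ultimately show False using wopt(2) assms(2) by fastforce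
  qed
qed

end

context setting begin

lemma dist3: "dist (x::real, y::real, z::real) (x, y, z') = \<bar>z - z'\<bar>"
  by (simp add: dist_Pair_Pair dist_real_def)

lemma top3:
  assumes uC: "u \<in> CC" and top: "\<forall>\<epsilon>>0. (fst u, fst (snd u), snd (snd u) + \<epsilon>) \<notin> CC"
  shows "\<exists>S. finite S \<and> S \<subseteq> KK \<and> card S \<le> 3 \<and> u \<in> convex hull S"
proof (cases "aff_dim KK \<le> 2")
  case True
  from uC obtain S where "finite S" "S \<subseteq> KK" "card S \<le> aff_dim KK + 1" "u \<in> convex hull S"
    using caratheodory_aff_dim[of KK] unfolding CC_def by auto
  then show ?thesis using True by (intro exI[of _ S]) auto
next
  case False
  have "aff_dim KK \<le> int DIM(p3)" by (rule aff_dim_le_DIM)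
  then have "aff_dim KK = int DIM(p3)" using False by simp
  then have "affine hull KK = UNIV" using aff_dim_eq_full[of KK] by simp
  then have "affine hull CC = UNIV" by (simp add: CC_def)
  then have ri: "rel_interior CC = interior CC" by (rule rel_interior_interior)
  have "u \<notin> interior CC"
  proof
    assume "u \<in> interior CC"
    then obtain e where e: "e > 0" "ball u e \<subseteq> CC" unfolding mem_interior by blast
    have "dist u (fst u, fst (snd u), snd (snd u) + e/2) = e/2"
    proof -
      obtain x y z where "u = (x,y,z)" by (cases u) auto
      then show ?thesis using e by (simp add: dist3)
    qed
    then have "(fst u, fst (snd u), snd (snd u) + e/2) \<in> CC" using e by auto
    then show False using top e by auto
  qed
  moreover have "closure CC = CC" using compact_CC by (simp add: compact_imp_closed)
  ultimately obtain c where c: "c \<noteq> 0" "\<And>y. y \<in> CC \<Longrightarrow> c \<bullet> u \<le> c \<bullet> y"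
  proof -
    have u1: "u \<in> closure CC" using uC closure_subset by auto
    have u2: "u \<notin> rel_interior CC" using ri \<open>u \<notin> interior CC\<close> by simp
    obtain c where c1: "c \<noteq> 0" and c2: "\<And>y. y \<in> closure CC \<Longrightarrow> c \<bullet> u \<le> c \<bullet> y"
      and "\<And>y. y \<in> rel_interior CC \<Longrightarrow> c \<bullet> u < c \<bullet> y"
      by (rule supporting_hyperplane_relative_frontier[OF convex_CC u1 u2]) blast
    have c3: "\<And>y. y \<in> CC \<Longrightarrow> c \<bullet> u \<le> c \<bullet> y" using c2 \<open>closure CC = CC\<close> by simp
    show ?thesis by (rule that[OF c1 c3])
  qed
  define H where "H = {y. c \<bullet> y = c \<bullet> u}"
  obtain S0 w where S0: "finite S0" "S0 \<subseteq> KK" "\<forall>x\<in>S0. 0 \<le> w x" "sum w S0 = 1"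
    and ue: "(\<Sum>v\<in>S0. w v *\<^sub>R v) = u"
    using uC unfolding CC_def convex_hull_explicit by blast
  have "(\<Sum>x\<in>S0. w x * (c \<bullet> x - c \<bullet> u)) = (\<Sum>x\<in>S0. w x * (c \<bullet> x)) - (\<Sum>x\<in>S0. w x) * (c \<bullet> u)"
    by (simp add: right_diff_distrib sum_subtractf sum_distrib_right)
  also have "(\<Sum>x\<in>S0. w x * (c \<bullet> x)) = c \<bullet> u"
    unfolding ue[symmetric] by (simp add: inner_sum_right)
  also have "c \<bullet> u - (\<Sum>x\<in>S0. w x) * (c \<bullet> u) = 0" using S0(4) by simp
  finally have z: "(\<Sum>x\<in>S0. w x * (c \<bullet> x - c \<bullet> u)) = 0" .
  have nn: "\<forall>x\<in>S0. 0 \<le> w x * (c \<bullet> x - c \<bullet> u)"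
  proof
    fix x assume x: "x \<in> S0"
    then have "x \<in> CC" using S0(2) KK_CC by blast
    then have "0 \<le> c \<bullet> x - c \<bullet> u" using c(2) by simp
    then show "0 \<le> w x * (c \<bullet> x - c \<bullet> u)" using S0(3) x by simp
  qed
  have "\<forall>x\<in>S0. w x * (c \<bullet> x - c \<bullet> u) = 0"
    using iffD1[OF sum_nonneg_eq_0_iff[OF S0(1) nn[rule_format]] z] .
  then have z0: "\<And>x. x \<in> S0 \<Longrightarrow> w x * (c \<bullet> x - c \<bullet> u) = 0" by blast
  have wz: "\<And>x. x \<in> S0 - S0 \<inter> H \<Longrightarrow> w x = 0"
  proof -
    fix x assume x: "x \<in> S0 - S0 \<inter> H"
    then have "c \<bullet> x - c \<bullet> u \<noteq> 0" unfolding H_def by simp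
    then show "w x = 0" using z0[of x] x by simp
  qed
  have "sum w (S0 \<inter> H) = 1" using S0(4) sum.mono_neutral_left[OF S0(1), of "S0 \<inter> H" w] wz by auto
  moreover have "(\<Sum>v\<in>S0 \<inter> H. w v *\<^sub>R v) = u"
    using ue sum.mono_neutral_left[OF S0(1), of "S0 \<inter> H" "\<lambda>v. w v *\<^sub>R v"] wz by auto
  ultimately have "u \<in> convex hull (S0 \<inter> H)"
    unfolding convex_hull_explicit mem_Collect_eq
    by (intro exI[of _ "S0 \<inter> H"] exI[of _ w]) (use S0 in auto)
  also have "\<dots> \<subseteq> convex hull (KK \<inter> H)" using S0(2) by (intro hull_mono) auto
  finally have uH: "u \<in> convex hull (KK \<inter> H)" .
  have "aff_dim (KK \<inter> H) \<le> aff_dim H" by (rule aff_dim_subset) auto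
  also have "aff_dim H = 2" using c(1) unfolding H_def by simp
  finally have ad: "aff_dim (KK \<inter> H) \<le> 2" .
  from uH obtain S where "finite S" "S \<subseteq> KK \<inter> H" "card S \<le> aff_dim (KK \<inter> H) + 1" "u \<in> convex hull S"
    using caratheodory_aff_dim[of "KK \<inter> H"] by auto
  then show ?thesis using ad by (intro exI[of _ S]) auto
qed

lemma top3_idx:
  assumes "finite S" "S \<subseteq> KK" "card S \<le> 3" "u \<in> convex hull S"
  shows "\<exists>lam \<zeta>. (\<forall>j\<in>{1..3::nat}. 0 \<le> lam j \<and> \<zeta> j \<in> {L..U}) \<and> sum lam {1..3} = 1 \<and>
      u = (\<Sum>j\<in>{1..3}. lam j *\<^sub>R kk (\<zeta> j))"
proof -
  obtain w where w: "\<forall>x\<in>S. 0 \<le> w x" "sum w S = 1" "(\<Sum>x\<in>S. w x *\<^sub>R x) = u"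
    using assms(4) unfolding convex_hull_finite[OF assms(1)] by blast
  obtain h where h: "bij_betw h {1..card S} S" using ex_bij_betw_nat_finite_1[OF assms(1)] by blast
  define lam where "lam j = (if j \<le> card S then w (h j) else 0)" for j
  define \<zeta> where "\<zeta> j = (if j \<le> card S then fst (h j) else 0)" for j
  have hS: "\<And>j. j \<in> {1..card S} \<Longrightarrow> h j \<in> S" using h by (auto simp: bij_betw_def)
  have sub: "{1..card S} \<subseteq> {1..3::nat}" unfolding subset_eq using assms(3) by auto
  have "(\<Sum>j\<in>{1..3}. lam j) = (\<Sum>j\<in>{1..card S}. lam j)"
    by (rule sum.mono_neutral_right) (use sub in \<open>auto simp: lam_def\<close>)
  also have "\<dots> = (\<Sum>j\<in>{1..card S}. w (h j))" by (rule sum.cong) (auto simp: lam_def)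
  also have "\<dots> = sum w S" using sum.reindex_bij_betw[OF h, of w] by simp
  finally have s1: "sum lam {1..3} = 1" using w by simp
  have "(\<Sum>j\<in>{1..3}. lam j *\<^sub>R kk (\<zeta> j)) = (\<Sum>j\<in>{1..card S}. lam j *\<^sub>R kk (\<zeta> j))"
    by (rule sum.mono_neutral_right) (use sub in \<open>auto simp: lam_def\<close>)
  also have "\<dots> = (\<Sum>j\<in>{1..card S}. w (h j) *\<^sub>R h j)"
    by (rule sum.cong) (auto simp: lam_def \<zeta>_def kk_fst(1) hS assms(2)[THEN subsetD])
  also have "\<dots> = (\<Sum>x\<in>S. w x *\<^sub>R x)" using sum.reindex_bij_betw[OF h, of "\<lambda>x. w x *\<^sub>R x"] by simp
  finally have s2: "u = (\<Sum>j\<in>{1..3}. lam j *\<^sub>R kk (\<zeta> j))" using w by simp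
  have "\<forall>j\<in>{1..3::nat}. 0 \<le> lam j \<and> \<zeta> j \<in> {L..U}"
  proof
    fix j :: nat assume "j \<in> {1..3}"
    show "0 \<le> lam j \<and> \<zeta> j \<in> {L..U}"
    proof (cases "j \<le> card S")
      case True
      then have "h j \<in> S" using hS \<open>j \<in> {1..3}\<close> by auto
      then show ?thesis using True w(1) kk_fst(2)[of "h j"] assms(2) by (auto simp: lam_def \<zeta>_def)
    qed (use LU in \<open>auto simp: lam_def \<zeta>_def\<close>)
  qed
  then show ?thesis using s1 s2 by blast
qed

end

context setting begin

lemma slots:
  fixes lam \<zeta> :: "nat \<Rightarrow> real" and m :: nat
  assumes m: "3 \<le> m" and lz: "\<forall>j\<in>{1..3::nat}. 0 \<le> lam j \<and> \<zeta> j \<in> {L..U}" and s1: "sum lam {1..3} = 1"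
  shows "\<exists>zz pp. (\<forall>i\<in>{1..m}. 0 < pp i \<and> zz i \<in> {L..U}) \<and>
           (\<forall>f. (\<Sum>i\<in>{1..m}. pp i * f (zz i)) = (\<Sum>j\<in>{1..3}. lam j * f (\<zeta> j)))"
proof -
  obtain j0 where j0: "j0 \<in> {1..3}" "lam j0 > 0"
  proof (rule ccontr)
    assume nt: "\<not> thesis"
    have "\<forall>j\<in>{1..3}. lam j = 0"
    proof
      fix j :: nat assume j: "j \<in> {1..3}"
      show "lam j = 0"
      proof (rule ccontr)
        assume "lam j \<noteq> 0"
        moreover have "0 \<le> lam j" using lz j by blast
        ultimately have "lam j > 0" by simp
        then show False using that[OF j] nt by blast
      qed
    qed
    then have "sum lam {1..3} = 0" by simp
    then show False using s1 by simp
  qed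
  define A where "A = {j\<in>{1..3::nat}. 0 < lam j \<and> j \<noteq> j0}"
  define B where "B = {1..m} - A"
  define N where "N = card B"
  have A3: "A \<subseteq> {1..3}" unfolding A_def by auto
  have Am: "A \<subseteq> {1..m}" using A3 m by auto
  have j0B: "j0 \<in> B" using j0 m unfolding B_def A_def by auto
  have fB: "finite B" unfolding B_def by simp
  have N0: "N > 0" unfolding N_def using j0B fB card_gt_0_iff by blast
  define zz where "zz i = (if i \<in> A then \<zeta> i else \<zeta> j0)" for i
  define pp where "pp i = (if i \<in> A then lam i else lam j0 / N)" for i
  have pos: "\<forall>i\<in>{1..m}. 0 < pp i \<and> zz i \<in> {L..U}"
    using j0 N0 lz A3 unfolding pp_def zz_def by (auto simp: A_def)
  have eq: "(\<Sum>i\<in>{1..m}. pp i * f (zz i)) = (\<Sum>j\<in>{1..3}. lam j * f (\<zeta> j))" for f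
  proof -
    have u: "{1..m} = A \<union> B" "A \<inter> B = {}" using Am unfolding B_def by auto
    have "(\<Sum>i\<in>{1..m}. pp i * f (zz i)) = (\<Sum>i\<in>A. pp i * f (zz i)) + (\<Sum>i\<in>B. pp i * f (zz i))"
      unfolding u(1) by (rule sum.union_disjoint) (use u fB A3 in \<open>auto intro: finite_subset\<close>)
    also have "(\<Sum>i\<in>A. pp i * f (zz i)) = (\<Sum>i\<in>A. lam i * f (\<zeta> i))"
      by (rule sum.cong) (auto simp: pp_def zz_def)
    also have "(\<Sum>i\<in>B. pp i * f (zz i)) = (\<Sum>i\<in>B. lam j0 / N * f (\<zeta> j0))"
      by (rule sum.cong) (auto simp: pp_def zz_def B_def)
    also have "\<dots> = lam j0 * f (\<zeta> j0)" using N0 unfolding N_def by simp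
    finally have 1: "(\<Sum>i\<in>{1..m}. pp i * f (zz i)) = (\<Sum>i\<in>A. lam i * f (\<zeta> i)) + lam j0 * f (\<zeta> j0)" .
    have j0A: "j0 \<notin> A" unfolding A_def by auto
    have "(\<Sum>j\<in>{1..3}. lam j * f (\<zeta> j)) = (\<Sum>j\<in>insert j0 A. lam j * f (\<zeta> j))"
    proof (rule sum.mono_neutral_right)
      show "insert j0 A \<subseteq> {1..3}" using j0 A3 by auto
      show "\<forall>i\<in>{1..3} - insert j0 A. lam i * f (\<zeta> i) = 0"
      proof
        fix i assume "i \<in> {1..3} - insert j0 A"
        then have "lam i = 0" using lz unfolding A_def by force
        then show "lam i * f (\<zeta> i) = 0" by simp
      qed
    qed simp
    also have "\<dots> = lam j0 * f (\<zeta> j0) + (\<Sum>j\<in>A. lam j * f (\<zeta> j))"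
      using j0A A3 by (simp add: finite_subset)
    finally show ?thesis using 1 by simp
  qed
  show ?thesis using pos eq by blast
qed

lemma Sset_ne: "-a \<noteq> 1 - a" by simp

lemma sum_Sset: "(\<Sum>s\<in>Sset a. g s) = g (-a) + g (1-a)"
  by (simp add: Sset_def)

lemma PS_vals: "PS a (-a) = 1 - a" "PS a (1-a) = a"
  by (auto simp: PS_def)

definition hpt :: "nat \<Rightarrow> (real \<Rightarrow> nat \<Rightarrow> real) \<Rightarrow> (real \<Rightarrow> nat \<Rightarrow> real) \<Rightarrow> real \<Rightarrow> p3" where
  "hpt m z p s = (\<Sum>i\<in>{1..m}. (p s i / PS a s) *\<^sub>R kk (z s i))"

lemma PS_pos: "s \<in> Sset a \<Longrightarrow> PS a s > 0"
  using a0 a1 by (auto simp: Sset_def PS_def)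

lemma hpt_coord:
  assumes "s \<in> Sset a"
  shows "PS a s * fst (hpt m z p s) = (\<Sum>i\<in>{1..m}. p s i * z s i)"
    "PS a s * fst (snd (hpt m z p s)) = (\<Sum>i\<in>{1..m}. p s i * (z s i)^2)"
    "PS a s * snd (snd (hpt m z p s)) = (\<Sum>i\<in>{1..m}. p s i * \<phi> (z s i))"
  using PS_pos[OF assms] unfolding hpt_def sum_coords kk_coords
  by (simp_all add: sum_distrib_left)

lemma hpt_CC:
  assumes "lam_feasible a \<rho> m z p" "s \<in> Sset a"
  shows "hpt m z p s \<in> CC"
  unfolding hpt_def
proof (rule convex_sum[OF _ convex_CC])
  have "(\<Sum>i\<in>{1..m}. p s i / PS a s) = (\<Sum>i\<in>{1..m}. p s i) / PS a s" by (simp add: sum_divide_distrib)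
  also have "\<dots> = 1" using assms PS_pos[OF assms(2)] unfolding lam_feasible_def by auto
  finally show "(\<Sum>i\<in>{1..m}. p s i / PS a s) = 1" .
  fix i assume i: "i \<in> {1..m}"
  show "0 \<le> p s i / PS a s" using assms i PS_pos[OF assms(2)] unfolding lam_feasible_def
    by (auto intro!: divide_nonneg_pos less_imp_le)
  have "z s i \<in> {L..U}" using assms i unfolding lam_feasible_def LU_iff by auto
  then show "kk (z s i) \<in> CC" by (rule kk_CC)
qed simp

definition "hlam m z p = (hpt m z p (-a), hpt m z p (1-a))"

lemma lam2hull:
  assumes "lam_feasible a \<rho> m z p"
  shows "hfeas (hlam m z p)" "hobj (hlam m z p) = lam_obj \<Phi> a \<rho> m z p"
    "hcon (hlam m z p) = (\<Sum>s\<in>Sset a. \<Sum>i\<in>{1..m}. p s i * ((z s i)\<^sup>2 - s * z s i))"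
proof -
  have S: "-a \<in> Sset a" "1-a \<in> Sset a" by (auto simp: Sset_def)
  note c1 = hpt_coord[OF S(1), of m z p, unfolded PS_vals]
  note c2 = hpt_coord[OF S(2), of m z p, unfolded PS_vals]
  have mean: "(\<Sum>s\<in>Sset a. \<Sum>i\<in>{1..m}. p s i * z s i) = 0" using assms unfolding lam_feasible_def by auto
  have sec: "(\<Sum>s\<in>Sset a. \<Sum>i\<in>{1..m}. p s i * ((z s i)\<^sup>2 - s * z s i)) \<le> 0"
    using assms unfolding lam_feasible_def by auto
  show hc: "hcon (hlam m z p) = (\<Sum>s\<in>Sset a. \<Sum>i\<in>{1..m}. p s i * ((z s i)\<^sup>2 - s * z s i))"
  proof -
    define u where "u = hpt m z p (-a)"
    define v where "v = hpt m z p (1-a)"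
    have "hcon (hlam m z p) = (1-a) * fst (snd u) + a * ((1-a) * fst u) + a * fst (snd v) - (1-a) * (a * fst v)"
      unfolding hcon_def hlam_def u_def v_def by (simp add: algebra_simps)
    also have "\<dots> = (\<Sum>i\<in>{1..m}. p (-a) i * (z (-a) i)^2) + a * (\<Sum>i\<in>{1..m}. p (-a) i * z (-a) i)
       + (\<Sum>i\<in>{1..m}. p (1-a) i * (z (1-a) i)^2) - (1-a) * (\<Sum>i\<in>{1..m}. p (1-a) i * z (1-a) i)"
      unfolding u_def v_def c1 c2 ..
    also have "\<dots> = (\<Sum>s\<in>Sset a. \<Sum>i\<in>{1..m}. p s i * ((z s i)\<^sup>2 - s * z s i))"
      unfolding sum_Sset by (simp add: algebra_simps sum.distrib sum_subtractf sum_distrib_left)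
    finally show ?thesis .
  qed
  show "hobj (hlam m z p) = lam_obj \<Phi> a \<rho> m z p"
    unfolding hobj_def hlam_def lam_obj_def fst_conv snd_conv sum_Sset c1(3) c2(3)
    by (simp add: \<phi>_def)
  show "hfeas (hlam m z p)"
    unfolding hfeas_def
  proof (intro conjI)
    show "fst (hlam m z p) \<in> CC" "snd (hlam m z p) \<in> CC"
      unfolding hlam_def using hpt_CC[OF assms] S by auto
    show "(1 - a) * fst (fst (hlam m z p)) + a * fst (snd (hlam m z p)) = 0"
      using mean unfolding hlam_def fst_conv snd_conv sum_Sset c1 c2 .
    show "hcon (hlam m z p) \<le> 0" using hc sec by simp
  qed
qed

end

context setting begin

lemma wopt_top1:
  "\<forall>\<epsilon>>0. (fst (fst wopt), fst (snd (fst wopt)), snd (snd (fst wopt)) + \<epsilon>) \<notin> CC"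
proof (intro allI impI notI)
  fix \<epsilon> :: real assume e: "\<epsilon> > 0"
    and inC: "(fst (fst wopt), fst (snd (fst wopt)), snd (snd (fst wopt)) + \<epsilon>) \<in> CC"
  define w' where "w' = ((fst (fst wopt), fst (snd (fst wopt)), snd (snd (fst wopt)) + \<epsilon>), snd wopt)"
  have "hfeas w'" using wopt(1) inC unfolding w'_def hfeas_def hcon_def by auto
  moreover have "hobj w' = hobj wopt + (1-a)*\<epsilon>" unfolding w'_def hobj_def by (simp add: algebra_simps)
  moreover have "(1-a)*\<epsilon> > 0" using e a1 by simp
  ultimately show False using wopt(2)[of w'] unfolding M_def by simp
qed

lemma wopt_top2:
  "\<forall>\<epsilon>>0. (fst (snd wopt), fst (snd (snd wopt)), snd (snd (snd wopt)) + \<epsilon>) \<notin> CC"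
proof (intro allI impI notI)
  fix \<epsilon> :: real assume e: "\<epsilon> > 0"
    and inC: "(fst (snd wopt), fst (snd (snd wopt)), snd (snd (snd wopt)) + \<epsilon>) \<in> CC"
  define w' where "w' = (fst wopt, (fst (snd wopt), fst (snd (snd wopt)), snd (snd (snd wopt)) + \<epsilon>))"
  have "hfeas w'" using wopt(1) inC unfolding w'_def hfeas_def hcon_def by auto
  moreover have "hobj w' = hobj wopt + a*\<epsilon>" unfolding w'_def hobj_def by (simp add: algebra_simps)
  moreover have "a*\<epsilon> > 0" using e a0 by simp
  ultimately show False using wopt(2)[of w'] unfolding M_def by simp
qed

lemma comp_repr:
  fixes m :: nat
  assumes "u \<in> CC" "\<forall>\<epsilon>>0. (fst u, fst (snd u), snd (snd u) + \<epsilon>) \<notin> CC" "3 \<le> m"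
  shows "\<exists>zz pp. (\<forall>i\<in>{1..m}. 0 < pp i \<and> zz i \<in> {L..U}) \<and> (\<Sum>i\<in>{1..m}. pp i) = 1 \<and>
     (\<Sum>i\<in>{1..m}. pp i * zz i) = fst u \<and> (\<Sum>i\<in>{1..m}. pp i * (zz i)^2) = fst (snd u) \<and>
     (\<Sum>i\<in>{1..m}. pp i * \<phi> (zz i)) = snd (snd u)"
proof -
  obtain S where S: "finite S" "S \<subseteq> KK" "card S \<le> 3" "u \<in> convex hull S"
    using top3[OF assms(1,2)] by blast
  obtain lam \<zeta> where l: "\<forall>j\<in>{1..3::nat}. 0 \<le> lam j \<and> \<zeta> j \<in> {L..U}" "sum lam {1..3} = 1"
    "u = (\<Sum>j\<in>{1..3}. lam j *\<^sub>R kk (\<zeta> j))"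
    using top3_idx[OF S] by blast
  obtain zz pp where zp: "\<forall>i\<in>{1..m}. 0 < pp i \<and> zz i \<in> {L..U}"
    "\<And>f. (\<Sum>i\<in>{1..m}. pp i * f (zz i)) = (\<Sum>j\<in>{1..3}. lam j * f (\<zeta> j))"
    using slots[OF assms(3) l(1,2)] by blast
  have "(\<Sum>i\<in>{1..m}. pp i) = 1" using zp(2)[of "\<lambda>_. 1"] l(2) by simp
  moreover have "(\<Sum>i\<in>{1..m}. pp i * zz i) = fst u" using zp(2)[of "\<lambda>x. x"] l(3)
    by (simp add: sum_coords kk_coords)
  moreover have "(\<Sum>i\<in>{1..m}. pp i * (zz i)^2) = fst (snd u)" using zp(2)[of "\<lambda>x. x^2"] l(3)
    by (simp add: sum_coords kk_coords)
  moreover have "(\<Sum>i\<in>{1..m}. pp i * \<phi> (zz i)) = snd (snd u)" using zp(2)[of "\<phi>"] l(3)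
    by (simp add: sum_coords kk_coords)
  ultimately show ?thesis using zp(1) by blast
qed

lemma lam_attain:
  fixes m :: nat
  assumes m: "3 \<le> m"
  shows "\<exists>z p. lam_feasible a \<rho> m z p \<and> lam_obj \<Phi> a \<rho> m z p = M"
proof -
  define u where "u = fst wopt"
  define v where "v = snd wopt"
  have uv: "u \<in> CC" "v \<in> CC" "(1-a) * fst u + a * fst v = 0" "hcon (u,v) \<le> 0"
    using wopt(1) unfolding hfeas_def u_def v_def by auto
  obtain zz1 pp1 where r1: "\<forall>i\<in>{1..m}. 0 < pp1 i \<and> zz1 i \<in> {L..U}" "(\<Sum>i\<in>{1..m}. pp1 i) = 1"
     "(\<Sum>i\<in>{1..m}. pp1 i * zz1 i) = fst u" "(\<Sum>i\<in>{1..m}. pp1 i * (zz1 i)^2) = fst (snd u)"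
     "(\<Sum>i\<in>{1..m}. pp1 i * \<phi> (zz1 i)) = snd (snd u)"
    using comp_repr[OF uv(1) wopt_top1[folded u_def] m] by blast
  obtain zz2 pp2 where r2: "\<forall>i\<in>{1..m}. 0 < pp2 i \<and> zz2 i \<in> {L..U}" "(\<Sum>i\<in>{1..m}. pp2 i) = 1"
     "(\<Sum>i\<in>{1..m}. pp2 i * zz2 i) = fst v" "(\<Sum>i\<in>{1..m}. pp2 i * (zz2 i)^2) = fst (snd v)"
     "(\<Sum>i\<in>{1..m}. pp2 i * \<phi> (zz2 i)) = snd (snd v)"
    using comp_repr[OF uv(2) wopt_top2[folded v_def] m] by blast
  define z where "z s i = (if s = -a then zz1 i else zz2 i)" for s i
  define p where "p s i = PS a s * (if s = -a then pp1 i else pp2 i)" for s i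
  have ne: "1 - a \<noteq> -a" by simp
  have gs: "(\<Sum>s\<in>Sset a. \<Sum>i\<in>{1..m}. p s i * F s (z s i)) =
     (1-a) * (\<Sum>i\<in>{1..m}. pp1 i * F (-a) (zz1 i)) + a * (\<Sum>i\<in>{1..m}. pp2 i * F (1-a) (zz2 i))" for F
    unfolding sum_Sset p_def z_def using ne by (simp add: PS_vals sum_distrib_left mult.assoc)
  have f1: "\<forall>s\<in>Sset a. \<forall>i\<in>{1..m}. 0 \<le> a + \<rho> * z s i \<and> a + \<rho> * z s i \<le> 1 \<and> 0 < p s i"
  proof (intro ballI)
    fix s i assume s: "s \<in> Sset a" and i: "i \<in> {1..m}"
    have zi: "z s i \<in> {L..U}" using r1(1) r2(1) i unfolding z_def by auto
    moreover have "0 < p s i" using PS_pos[OF s] r1(1) r2(1) i unfolding p_def by auto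
    ultimately show "0 \<le> a + \<rho> * z s i \<and> a + \<rho> * z s i \<le> 1 \<and> 0 < p s i" unfolding LU_iff by auto
  qed
  have f2: "\<forall>s\<in>Sset a. (\<Sum>i\<in>{1..m}. p s i) = PS a s"
  proof
    fix s assume s: "s \<in> Sset a"
    show "(\<Sum>i\<in>{1..m}. p s i) = PS a s"
      using r1(2) r2(2) unfolding p_def by (cases "s = -a") (simp_all add: sum_distrib_left[symmetric])
  qed
  have f3: "(\<Sum>s\<in>Sset a. \<Sum>i\<in>{1..m}. p s i * z s i) = 0"
    using gs[of "\<lambda>s x. x"] r1(3) r2(3) uv(3) by simp
  have e1: "(\<Sum>i\<in>{1..m}. pp1 i * ((zz1 i)^2 + a * zz1 i)) = (\<Sum>i\<in>{1..m}. pp1 i * (zz1 i)^2) + a * (\<Sum>i\<in>{1..m}. pp1 i * zz1 i)"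
    by (simp add: algebra_simps sum.distrib sum_distrib_left)
  have e2: "(\<Sum>i\<in>{1..m}. pp2 i * ((zz2 i)^2 - (1-a) * zz2 i)) = (\<Sum>i\<in>{1..m}. pp2 i * (zz2 i)^2) - (1-a) * (\<Sum>i\<in>{1..m}. pp2 i * zz2 i)"
    by (simp add: right_diff_distrib sum_subtractf sum_distrib_left mult.left_commute)
  have "(\<Sum>s\<in>Sset a. \<Sum>i\<in>{1..m}. p s i * ((z s i)\<^sup>2 - s * z s i)) =
      (1-a) * (\<Sum>i\<in>{1..m}. pp1 i * ((zz1 i)^2 + a * zz1 i)) + a * (\<Sum>i\<in>{1..m}. pp2 i * ((zz2 i)^2 - (1-a) * zz2 i))"
    using gs[of "\<lambda>s x. x^2 - s * x"] by simp
  also have "\<dots> = hcon (u,v)"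
    unfolding e1 e2 r1(3,4) r2(3,4) hcon_def fst_conv snd_conv by (simp add: algebra_simps)
  finally have f4: "(\<Sum>s\<in>Sset a. \<Sum>i\<in>{1..m}. p s i * ((z s i)\<^sup>2 - s * z s i)) \<le> 0" using uv(4) by simp
  have feas: "lam_feasible a \<rho> m z p" unfolding lam_feasible_def using f1 f2 f3 f4 by blast
  have "lam_obj \<Phi> a \<rho> m z p = (1-a) * snd (snd u) + a * snd (snd v)"
    unfolding lam_obj_def using gs[of "\<lambda>s x. \<Phi> (a + \<rho> * x)"] r1(5) r2(5) by (simp add: \<phi>_def)
  also have "\<dots> = M" unfolding M_def hobj_def u_def v_def ..
  finally show ?thesis using feas by blast
qed

end

context setting begin

definition "lamQ m z p s = map_pmf (z s) (embed_pmf (\<lambda>i. if i \<in> {1..m} then p s i / PS a s else 0))"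

lemma lamQ_props:
  assumes feas: "lam_feasible a \<rho> m z p" and s: "s \<in> Sset a"
  shows "set_pmf (lamQ m z p s) \<subseteq> z s ` {1..m}"
    "\<And>g. measure_pmf.expectation (lamQ m z p s) g = (\<Sum>i\<in>{1..m}. (p s i / PS a s) * g (z s i))"
proof -
  define f where "f i = (if i \<in> {1..m} then p s i / PS a s else 0)" for i
  have PSp: "PS a s > 0" using PS_pos[OF s] .
  have nonneg: "\<And>i. 0 \<le> f i" using feas s PSp unfolding f_def lam_feasible_def
    by (auto intro!: divide_nonneg_pos less_imp_le)
  have sumf: "(\<Sum>i\<in>{1..m}. f i) = 1"
  proof -
    have "(\<Sum>i\<in>{1..m}. f i) = (\<Sum>i\<in>{1..m}. p s i) / PS a s" unfolding f_def by (simp add: sum_divide_distrib)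
    then show ?thesis using feas s PSp unfolding lam_feasible_def by auto
  qed
  have prob: "(\<integral>\<^sup>+x. ennreal (f x) \<partial>count_space UNIV) = 1"
  proof -
    have "(\<integral>\<^sup>+x. ennreal (f x) \<partial>count_space UNIV) = (\<Sum>x\<in>{1..m}. ennreal (f x))"
      by (rule nn_integral_count_space') (auto simp: f_def)
    also have "\<dots> = ennreal (\<Sum>x\<in>{1..m}. f x)" using nonneg by simp
    finally show ?thesis using sumf by simp
  qed
  have Qe: "lamQ m z p s = map_pmf (z s) (embed_pmf f)" unfolding lamQ_def f_def ..
  have se: "set_pmf (embed_pmf f) \<subseteq> {1..m}"
    using set_embed_pmf[of f, OF nonneg prob] unfolding f_def by auto
  show "set_pmf (lamQ m z p s) \<subseteq> z s ` {1..m}" unfolding Qe using se by auto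
  fix g :: "real \<Rightarrow> real"
  have "measure_pmf.expectation (lamQ m z p s) g = measure_pmf.expectation (embed_pmf f) (\<lambda>i. g (z s i))"
    unfolding Qe by simp
  also have "\<dots> = (\<Sum>i\<in>{1..m}. g (z s i) * pmf (embed_pmf f) i)"
    by (rule integral_measure_pmf_real) (use se in auto)
  also have "\<dots> = (\<Sum>i\<in>{1..m}. (p s i / PS a s) * g (z s i))"
    by (rule sum.cong) (auto simp: pmf_embed_pmf[OF nonneg prob] f_def)
  finally show "measure_pmf.expectation (lamQ m z p s) g = (\<Sum>i\<in>{1..m}. (p s i / PS a s) * g (z s i))" .
qed

lemma lamQ_jointE:
  assumes feas: "lam_feasible a \<rho> m z p"
  shows "jointE a (lamQ m z p) f = (\<Sum>s\<in>Sset a. \<Sum>i\<in>{1..m}. p s i * f s (z s i))"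
  unfolding jointE_def
proof (rule sum.cong[OF refl])
  fix s assume s: "s \<in> Sset a"
  have PSp: "PS a s > 0" using PS_pos[OF s] .
  show "PS a s * measure_pmf.expectation (lamQ m z p s) (f s) = (\<Sum>i\<in>{1..m}. p s i * f s (z s i))"
    unfolding lamQ_props(2)[OF feas s] sum_distrib_left using PSp by (intro sum.cong) auto
qed

lemma lam2gamma:
  assumes feas: "lam_feasible a \<rho> m z p"
  shows "gamma_feasible a \<rho> (lamQ m z p)" "gamma_obj \<Phi> a \<rho> (lamQ m z p) = lam_obj \<Phi> a \<rho> m z p"
proof -
  show "gamma_obj \<Phi> a \<rho> (lamQ m z p) = lam_obj \<Phi> a \<rho> m z p"
    unfolding gamma_obj_def lam_obj_def lamQ_jointE[OF feas] ..
  have sup: "\<forall>s\<in>Sset a. \<forall>x\<in>set_pmf (lamQ m z p s). 0 \<le> a + \<rho> * x \<and> a + \<rho> * x \<le> 1"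
  proof (intro ballI)
    fix s x assume s: "s \<in> Sset a" and x: "x \<in> set_pmf (lamQ m z p s)"
    then obtain i where "i \<in> {1..m}" "x = z s i" using lamQ_props(1)[OF feas s] by auto
    then show "0 \<le> a + \<rho> * x \<and> a + \<rho> * x \<le> 1" using feas s unfolding lam_feasible_def by auto
  qed
  have m0: "jointE a (lamQ m z p) (\<lambda>s z. z) = 0"
    unfolding lamQ_jointE[OF feas] using feas unfolding lam_feasible_def by auto
  have "jointE a (lamQ m z p) (\<lambda>s z. z\<^sup>2) - jointE a (lamQ m z p) (\<lambda>s z. s * z) =
      (\<Sum>s\<in>Sset a. \<Sum>i\<in>{1..m}. p s i * ((z s i)\<^sup>2 - s * z s i))"
    unfolding lamQ_jointE[OF feas] by (simp add: sum_subtractf right_diff_distrib)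
  then have "jointE a (lamQ m z p) (\<lambda>s z. z\<^sup>2) \<le> jointE a (lamQ m z p) (\<lambda>s z. s * z)"
    using feas unfolding lam_feasible_def by linarith
  then show "gamma_feasible a \<rho> (lamQ m z p)" unfolding gamma_feasible_def using sup m0 by blast
qed

end

context setting begin

definition eh :: "real pmf \<Rightarrow> p3" where
  "eh P = (measure_pmf.expectation P (\<lambda>z. z), measure_pmf.expectation P (\<lambda>z. z^2),
           measure_pmf.expectation P \<phi>)"

lemma pmf_integrable:
  fixes g :: "real \<Rightarrow> real"
  assumes "\<forall>z\<in>set_pmf P. z \<in> {L..U}" "continuous_on {L..U} g"
  shows "integrable (measure_pmf P) g"
proof -
  have "compact (g ` {L..U})" by (rule compact_continuous_image[OF assms(2)]) simp
  then obtain B where B: "\<forall>x\<in>g ` {L..U}. norm x \<le> B" using compact_imp_bounded bounded_iff by metis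
  show ?thesis
  proof (rule measure_pmf.integrable_const_bound[where B=B])
    show "AE x in measure_pmf P. norm (g x) \<le> B"
      unfolding AE_measure_pmf_iff using assms(1) B by auto
  qed simp
qed

lemma eh_CC:
  assumes sup: "\<forall>z\<in>set_pmf P. z \<in> {L..U}"
  shows "eh P \<in> CC"
proof (rule ccontr)
  assume nin: "eh P \<notin> CC"
  have "closed CC" using compact_CC by (rule compact_imp_closed)
  from separating_hyperplane_closed_point[OF convex_CC this nin]
  obtain c b where cb: "inner c (eh P) < b" "\<forall>x\<in>CC. inner c x > b" by blast
  obtain c1 c2 c3 where c: "c = (c1, c2, c3)" by (cases c) auto
  have i1: "integrable (measure_pmf P) (\<lambda>z. z)"
    by (rule pmf_integrable[OF sup]) (intro continuous_intros)
  have i2: "integrable (measure_pmf P) (\<lambda>z. z^2)"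
    by (rule pmf_integrable[OF sup]) (intro continuous_intros)
  have i3: "integrable (measure_pmf P) \<phi>" by (rule pmf_integrable[OF sup phi_cont])
  have "inner c (eh P) = measure_pmf.expectation P (\<lambda>z. c1 * z + c2 * z^2 + c3 * \<phi> z)"
    unfolding c eh_def using i1 i2 i3 by simp
  also have "\<dots> \<ge> b"
  proof (rule measure_pmf.integral_ge_const)
    show "integrable (measure_pmf P) (\<lambda>z. c1 * z + c2 * z^2 + c3 * \<phi> z)" using i1 i2 i3 by simp
    show "AE x in measure_pmf P. b \<le> c1 * x + c2 * x^2 + c3 * \<phi> x"
      unfolding AE_measure_pmf_iff
    proof
      fix x assume "x \<in> set_pmf P"
      then have "kk x \<in> CC" using sup kk_CC by auto
      then have "inner c (kk x) > b" using cb(2) by auto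
      then show "b \<le> c1 * x + c2 * x^2 + c3 * \<phi> x" unfolding c kk_def by simp
    qed
  qed
  finally show False using cb(1) by simp
qed

definition "hgam Q = (eh (Q (-a)), eh (Q (1-a)))"

lemma gamma2hull:
  assumes "gamma_feasible a \<rho> Q"
  shows "hfeas (hgam Q)" "hobj (hgam Q) = gamma_obj \<Phi> a \<rho> Q"
    "hcon (hgam Q) = jointE a Q (\<lambda>s z. z\<^sup>2) - jointE a Q (\<lambda>s z. s * z)"
proof -
  have S: "-a \<in> Sset a" "1-a \<in> Sset a" by (auto simp: Sset_def)
  have sup: "\<forall>z\<in>set_pmf (Q s). z \<in> {L..U}" if "s \<in> Sset a" for s
    using assms that unfolding gamma_feasible_def LU_iff by auto
  show hc: "hcon (hgam Q) = jointE a Q (\<lambda>s z. z\<^sup>2) - jointE a Q (\<lambda>s z. s * z)"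
    unfolding hcon_def hgam_def eh_def jointE_def sum_Sset PS_vals by (simp add: algebra_simps)
  show "hobj (hgam Q) = gamma_obj \<Phi> a \<rho> Q"
    unfolding hobj_def hgam_def eh_def gamma_obj_def jointE_def sum_Sset PS_vals by (simp add: \<phi>_def[abs_def])
  have mean: "(1 - a) * fst (fst (hgam Q)) + a * fst (snd (hgam Q)) = jointE a Q (\<lambda>s z. z)"
    unfolding hgam_def eh_def jointE_def sum_Sset PS_vals by simp
  show "hfeas (hgam Q)" unfolding hfeas_def
    using eh_CC[OF sup[OF S(1)]] eh_CC[OF sup[OF S(2)]] mean hc assms unfolding gamma_feasible_def
    by (auto simp: hgam_def)
qed

end

context setting begin

lemma lam_le_M: "lam_feasible a \<rho> m z p \<Longrightarrow> lam_obj \<Phi> a \<rho> m z p \<le> M"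
  using lam2hull wopt(2) by metis

lemma gam_le_M: "gamma_feasible a \<rho> Q \<Longrightarrow> gamma_obj \<Phi> a \<rho> Q \<le> M"
  using gamma2hull wopt(2) by metis

lemma vals:
  fixes m :: nat
  assumes m: "3 \<le> m"
  shows "Lambda \<Phi> a \<rho> m = M" "Gamma \<Phi> a \<rho> = M" "\<exists>z p. lam_optimal \<Phi> a \<rho> m z p"
    "\<And>z p. lam_optimal \<Phi> a \<rho> m z p \<Longrightarrow> lam_obj \<Phi> a \<rho> m z p = M"
    "\<And>Q. gamma_optimal \<Phi> a \<rho> Q \<Longrightarrow> gamma_obj \<Phi> a \<rho> Q = M"
proof -
  obtain z0 p0 where zp: "lam_feasible a \<rho> m z0 p0" "lam_obj \<Phi> a \<rho> m z0 p0 = M"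
    using lam_attain[OF m] by blast
  show "Lambda \<Phi> a \<rho> m = M" unfolding Lambda_def
  proof (rule cSup_eq_maximum)
    show "M \<in> {lam_obj \<Phi> a \<rho> m z p |z p. lam_feasible a \<rho> m z p}" using zp by (metis (mono_tags, lifting) mem_Collect_eq)
  qed (use lam_le_M in auto)
  have g0: "gamma_feasible a \<rho> (lamQ m z0 p0)" "gamma_obj \<Phi> a \<rho> (lamQ m z0 p0) = M"
    using lam2gamma[OF zp(1)] zp(2) by auto
  show "Gamma \<Phi> a \<rho> = M" unfolding Gamma_def
  proof (rule cSup_eq_maximum)
    show "M \<in> {gamma_obj \<Phi> a \<rho> Q |Q. gamma_feasible a \<rho> Q}" using g0 by (metis (mono_tags, lifting) mem_Collect_eq)
  qed (use gam_le_M in auto)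
  show "\<exists>z p. lam_optimal \<Phi> a \<rho> m z p"
    unfolding lam_optimal_def using zp lam_le_M by metis
  show "lam_obj \<Phi> a \<rho> m z p = M" if "lam_optimal \<Phi> a \<rho> m z p" for z p
    using that zp lam_le_M unfolding lam_optimal_def by (metis order_antisym)
  show "gamma_obj \<Phi> a \<rho> Q = M" if "gamma_optimal \<Phi> a \<rho> Q" for Q
    using that g0 gam_le_M unfolding gamma_optimal_def by (metis order_antisym)
qed

lemma part2_gamma:
  fixes m :: nat
  assumes m: "3 \<le> m" and "gamma_optimal \<Phi> a \<rho> Q"
  shows "jointE a Q (\<lambda>s z. z\<^sup>2) = jointE a Q (\<lambda>s z. s * z)"
proof -
  have f: "gamma_feasible a \<rho> Q" using assms(2) unfolding gamma_optimal_def by blast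
  have "hcon (hgam Q) = 0"
    using tight[OF gamma2hull(1)[OF f]] gamma2hull(2)[OF f] vals(5)[OF m assms(2)] by simp
  then show ?thesis using gamma2hull(3)[OF f] by simp
qed

lemma part2_lam:
  fixes m :: nat
  assumes m: "3 \<le> m" and "lam_optimal \<Phi> a \<rho> m z p"
  shows "(\<Sum>s\<in>Sset a. \<Sum>i\<in>{1..m}. p s i * ((z s i)\<^sup>2 - s * z s i)) = 0"
proof -
  have f: "lam_feasible a \<rho> m z p" using assms(2) unfolding lam_optimal_def by blast
  have "hcon (hlam m z p) = 0"
    using tight[OF lam2hull(1)[OF f]] lam2hull(2)[OF f] vals(4)[OF m assms(2)] by simp
  then show ?thesis using lam2hull(3)[OF f] by simp
qed

end

context setting begin

lemma dsum_upd:
  fixes g :: "'a \<Rightarrow> 'b \<Rightarrow> 'c \<Rightarrow> real"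
  assumes "finite S" "finite I" "s0 \<in> S" "i0 \<in> I"
  shows "(\<Sum>s\<in>S. \<Sum>i\<in>I. g s i (if s = s0 \<and> i = i0 then c else z s i)) =
         (\<Sum>s\<in>S. \<Sum>i\<in>I. g s i (z s i)) - g s0 i0 (z s0 i0) + g s0 i0 c"
proof -
  have "(\<Sum>s\<in>S. \<Sum>i\<in>I. g s i (if s = s0 \<and> i = i0 then c else z s i)) =
        (\<Sum>s\<in>S. \<Sum>i\<in>I. g s i (z s i) + (if s = s0 \<and> i = i0 then g s0 i0 c - g s0 i0 (z s0 i0) else 0))"
    by (intro sum.cong refl) auto
  also have "\<dots> = (\<Sum>s\<in>S. \<Sum>i\<in>I. g s i (z s i)) + (\<Sum>s\<in>S. \<Sum>i\<in>I. (if s = s0 \<and> i = i0 then g s0 i0 c - g s0 i0 (z s0 i0) else 0))"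
    by (simp add: sum.distrib)
  also have "(\<Sum>s\<in>S. \<Sum>i\<in>I. (if s = s0 \<and> i = i0 then g s0 i0 c - g s0 i0 (z s0 i0) else 0)) =
             (\<Sum>s\<in>S. if s = s0 then g s0 i0 c - g s0 i0 (z s0 i0) else 0)"
    using assms by (intro sum.cong refl) (auto simp: if_distrib sum.delta)
  also have "\<dots> = g s0 i0 c - g s0 i0 (z s0 i0)" using assms by (simp add: sum.delta)
  finally show ?thesis by simp
qed

lemma spread2:
  assumes "x' \<in> {L..U}" "y' \<in> {L..U}" "x' < x" "x \<le> y" "y < y'" "0 < wp" "0 < wr"
    "wp * x' + wr * y' = wp * x + wr * y"
  shows "wp * \<phi> x + wr * \<phi> y \<le> wp * \<phi> x' + wr * \<phi> y'"
proof -
  define D where "D = y' - x'"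
  have D: "D > 0" using assms unfolding D_def by simp
  define al where "al = (x - x') / D"
  define be where "be = (y - x') / D"
  have al: "0 \<le> al" "al \<le> 1" using assms D unfolding al_def D_def by (auto simp: field_simps)
  have be: "0 \<le> be" "be \<le> 1" using assms D unfolding be_def D_def by (auto simp: field_simps)
  have "al * D = x - x'" unfolding al_def using D by simp
  then have xe: "x = (1 - al) * x' + al * y'" unfolding D_def by (simp add: algebra_simps)
  have "be * D = y - x'" unfolding be_def using D by simp
  then have ye: "y = (1 - be) * x' + be * y'" unfolding D_def by (simp add: algebra_simps)
  have p1: "\<phi> x \<le> (1 - al) * \<phi> x' + al * \<phi> y'" unfolding xe by (rule phi_conv) (use assms al in auto)
  have p2: "\<phi> y \<le> (1 - be) * \<phi> x' + be * \<phi> y'" unfolding ye by (rule phi_conv) (use assms be in auto)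
  have key: "wp * al + wr * be = wr"
  proof -
    have "wp * al + wr * be = (wp * (x - x') + wr * (y - x')) / D" unfolding al_def be_def using D
      by (simp add: field_simps)
    also have "wp * (x - x') + wr * (y - x') = wr * D" using assms(8) unfolding D_def by (simp add: algebra_simps)
    finally show ?thesis using D by simp
  qed
  have "wp * \<phi> x + wr * \<phi> y \<le> wp * ((1 - al) * \<phi> x' + al * \<phi> y') + wr * ((1 - be) * \<phi> x' + be * \<phi> y')"
    using p1 p2 assms(6,7) by (intro add_mono mult_left_mono) auto
  also have "\<dots> = (wp + wr - (wp * al + wr * be)) * \<phi> x' + (wp * al + wr * be) * \<phi> y'"
    by (simp add: algebra_simps)
  also have "\<dots> = wp * \<phi> x' + wr * \<phi> y'" unfolding key by simp
  finally show ?thesis .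
qed

lemma feas_facts:
  assumes f: "lam_feasible a \<rho> m z p" and s: "s \<in> Sset a" and i: "i \<in> {1..m}"
  shows "z s i \<in> {L..U}" "0 < p s i"
  using f s i unfolding lam_feasible_def LU_iff by auto

lemma hpt_weights:
  assumes f: "lam_feasible a \<rho> m z p" and s: "s \<in> Sset a"
  shows "\<forall>i\<in>{1..m}. 0 \<le> p s i / PS a s" "(\<Sum>i\<in>{1..m}. p s i / PS a s) = 1"
    "\<forall>i\<in>{1..m}. kk (z s i) \<in> CC"
proof -
  have PSp: "PS a s > 0" using PS_pos[OF s] .
  show "\<forall>i\<in>{1..m}. 0 \<le> p s i / PS a s" using f s PSp unfolding lam_feasible_def
    by (auto intro!: divide_nonneg_pos less_imp_le)
  have "(\<Sum>i\<in>{1..m}. p s i / PS a s) = (\<Sum>i\<in>{1..m}. p s i) / PS a s" by (simp add: sum_divide_distrib)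
  then show "(\<Sum>i\<in>{1..m}. p s i / PS a s) = 1" using f s PSp unfolding lam_feasible_def by auto
  show "\<forall>i\<in>{1..m}. kk (z s i) \<in> CC" using feas_facts[OF f s] kk_CC by auto
qed

lemma swap_contra:
  fixes m :: nat
  assumes m: "3 \<le> m" and opt: "lam_optimal \<Phi> a \<rho> m z p" and i0: "i0 \<in> {1..m}" and j0: "j0 \<in> {1..m}"
    and lt: "z (1-a) j0 < z (-a) i0"
  shows False
proof -
  have f: "lam_feasible a \<rho> m z p" using opt unfolding lam_optimal_def by blast
  have S: "-a \<in> Sset a" "1-a \<in> Sset a" by (auto simp: Sset_def)
  define x where "x = z (-a) i0"
  define y where "y = z (1-a) j0"
  define pi where "pi = p (-a) i0"
  define rj where "rj = p (1-a) j0"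
  have pos: "0 < pi" "0 < rj" using feas_facts[OF f S(1) i0] feas_facts[OF f S(2) j0] pi_def rj_def by auto
  have xy: "x \<in> {L..U}" "y \<in> {L..U}" using feas_facts[OF f S(1) i0] feas_facts[OF f S(2) j0] x_def y_def by auto
  have a': "0 < 1 - a" "0 < a" using a0 a1 by auto
  define t where "t = min pi rj"
  have t: "0 < t" "t \<le> pi" "t \<le> rj" using pos unfolding t_def by auto
  define u where "u = hpt m z p (-a)"
  define v where "v = hpt m z p (1-a)"
  have uv: "hlam m z p = (u,v)" unfolding hlam_def u_def v_def ..
  define Yu where "Yu = (1 - t/pi) *\<^sub>R kk x + (t/pi) *\<^sub>R kk y"
  define Yv where "Yv = (1 - t/rj) *\<^sub>R kk y + (t/rj) *\<^sub>R kk x"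
  have YuC: "Yu \<in> CC" unfolding Yu_def using convex_CC[unfolded convex_def] kk_CC[OF xy(1)] kk_CC[OF xy(2)] t pos
    by (simp add: divide_le_eq_1)
  have YvC: "Yv \<in> CC" unfolding Yv_def using convex_CC[unfolded convex_def] kk_CC[OF xy(1)] kk_CC[OF xy(2)] t pos
    by (simp add: divide_le_eq_1)
  define u' where "u' = u + (pi / PS a (-a)) *\<^sub>R (Yu - kk x)"
  define v' where "v' = v + (rj / PS a (1-a)) *\<^sub>R (Yv - kk y)"
  have u'C: "u' \<in> CC" unfolding u'_def u_def hpt_def pi_def x_def
    using replace_atom[of "{1..m}" "\<lambda>i. p (-a) i / PS a (-a)" "\<lambda>i. kk (z (-a) i)" i0 Yu]
      hpt_weights[OF f S(1)] i0 YuC by simp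
  have v'C: "v' \<in> CC" unfolding v'_def v_def hpt_def rj_def y_def
    using replace_atom[of "{1..m}" "\<lambda>i. p (1-a) i / PS a (1-a)" "\<lambda>i. kk (z (1-a) i)" j0 Yv]
      hpt_weights[OF f S(2)] j0 YvC by simp
  define al where "al = t/(1-a)"
  define be where "be = t/a"
  have cu: "fst u' = fst u + al * (y - x)" "fst (snd u') = fst (snd u) + al * (y^2 - x^2)"
    "snd (snd u') = snd (snd u) + al * (\<phi> y - \<phi> x)"
    unfolding u'_def Yu_def PS_vals al_def using pos a' by (simp_all add: kk_def field_simps)
  have cv: "fst v' = fst v + be * (x - y)" "fst (snd v') = fst (snd v) + be * (x^2 - y^2)"
    "snd (snd v') = snd (snd v) + be * (\<phi> x - \<phi> y)"
    unfolding v'_def Yv_def PS_vals be_def using pos a' by (simp_all add: kk_def field_simps)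
  have h0: "hfeas (u,v)" "hobj (u,v) = M"
    using lam2hull(1,2)[OF f] vals(4)[OF m opt] uv by auto
  have e1: "(1-a) * al = t" "a * be = t" using a' unfolding al_def be_def by auto
  have "(1-a) * fst u' + a * fst v' = (1-a) * fst u + a * fst v + ((1-a) * al) * (y - x) + (a * be) * (x - y)"
    unfolding cu cv by (simp add: algebra_simps)
  then have mean: "(1-a) * fst u' + a * fst v' = (1-a) * fst u + a * fst v"
    unfolding e1 by (simp add: algebra_simps)
  have "hcon (u',v') = hcon (u,v) + ((1-a) * al) * ((y^2 - x^2) + a * (y - x))
      + (a * be) * ((x^2 - y^2) - (1-a) * (x - y))"
    unfolding hcon_def fst_conv snd_conv cu cv by (simp add: algebra_simps)
  also have "\<dots> = hcon (u,v) + t * (y - x)" unfolding e1 by (simp add: algebra_simps)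
  finally have hc: "hcon (u',v') = hcon (u,v) + t * (y - x)" .
  have "hobj (u',v') = hobj (u,v) + ((1-a) * al) * (\<phi> y - \<phi> x) + (a * be) * (\<phi> x - \<phi> y)"
    unfolding hobj_def fst_conv snd_conv cu cv by (simp add: algebra_simps)
  then have ho: "hobj (u',v') = hobj (u,v)" unfolding e1 by (simp add: algebra_simps)
  have neg: "t * (y - x) < 0" using t lt x_def y_def by (simp add: mult_pos_neg)
  have "hfeas (u',v')" using h0(1) u'C v'C mean hc neg unfolding hfeas_def by auto
  then have "hcon (u',v') = 0" using tight ho h0(2) by simp
  then show False using hc neg h0(1) unfolding hfeas_def by auto
qed

end

context setting begin

lemma emove_contra:
  fixes m :: nat
  assumes m: "3 \<le> m" and opt: "lam_optimal \<Phi> a \<rho> m z p" and i0: "i0 \<in> {1..m}" and j0: "j0 \<in> {1..m}"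
    and xL: "L < z (-a) i0" and yU: "z (1-a) j0 < U"
    and le: "z (-a) i0 \<le> z (1-a) j0" and lt: "z (1-a) j0 < z (-a) i0 + 1/2"
  shows False
proof -
  have f: "lam_feasible a \<rho> m z p" using opt unfolding lam_optimal_def by blast
  have S: "-a \<in> Sset a" "1-a \<in> Sset a" by (auto simp: Sset_def)
  have ne: "1 - a \<noteq> -a" by simp
  define x where "x = z (-a) i0"
  define y where "y = z (1-a) j0"
  define pi where "pi = p (-a) i0"
  define rj where "rj = p (1-a) j0"
  have pos: "0 < pi" "0 < rj" using feas_facts[OF f S(1) i0] feas_facts[OF f S(2) j0] pi_def rj_def by auto
  have xy: "x \<in> {L..U}" "y \<in> {L..U}" using feas_facts[OF f S(1) i0] feas_facts[OF f S(2) j0] x_def y_def by auto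
  define c where "c = 1/pi + 1/rj"
  define g where "g = 1 + 2*x - 2*y"
  have c: "c > 0" using pos unfolding c_def by (intro add_pos_pos divide_pos_pos) auto
  have g: "g > 0" using lt unfolding g_def x_def y_def by simp
  define \<epsilon> where "\<epsilon> = min (min (pi*(x-L)) (rj*(U-y))) (g/(2*c))"
  have e: "0 < \<epsilon>" "\<epsilon> \<le> pi*(x-L)" "\<epsilon> \<le> rj*(U-y)" "\<epsilon> \<le> g/(2*c)"
    using pos xL yU c g unfolding \<epsilon>_def x_def y_def by auto
  define x' where "x' = x - \<epsilon>/pi"
  define y' where "y' = y + \<epsilon>/rj"
  have x'b: "L \<le> x'" "x' < x"
  proof -
    have "\<epsilon>/pi \<le> x - L" using e(2) pos by (simp add: divide_le_eq mult.commute)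
    then show "L \<le> x'" unfolding x'_def by simp
    show "x' < x" unfolding x'_def using e(1) pos by simp
  qed
  have y'b: "y' \<le> U" "y < y'"
  proof -
    have "\<epsilon>/rj \<le> U - y" using e(3) pos by (simp add: divide_le_eq mult.commute)
    then show "y' \<le> U" unfolding y'_def by simp
    show "y < y'" unfolding y'_def using e(1) pos by simp
  qed
  have x'U: "x' \<in> {L..U}" using x'b xy by auto
  have y'U: "y' \<in> {L..U}" using y'b xy by auto
  define z1 where "z1 s i = (if s = -a \<and> i = i0 then x' else z s i)" for s i
  define z' where "z' s i = (if s = 1-a \<and> i = j0 then y' else z1 s i)" for s i
  have z1j: "z1 (1-a) j0 = y" unfolding z1_def y_def using ne by simp
  have upd: "(\<Sum>s\<in>Sset a. \<Sum>i\<in>{1..m}. G s i (z' s i)) =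
     (\<Sum>s\<in>Sset a. \<Sum>i\<in>{1..m}. G s i (z s i)) - G (-a) i0 x + G (-a) i0 x' - G (1-a) j0 y + G (1-a) j0 y'"
    for G :: "real \<Rightarrow> nat \<Rightarrow> real \<Rightarrow> real"
  proof -
    have fS: "finite (Sset a)" by (simp add: Sset_def)
    have "(\<Sum>s\<in>Sset a. \<Sum>i\<in>{1..m}. G s i (z' s i)) = (\<Sum>s\<in>Sset a. \<Sum>i\<in>{1..m}. G s i (z1 s i)) - G (1-a) j0 (z1 (1-a) j0) + G (1-a) j0 y'"
      unfolding z'_def by (rule dsum_upd[OF fS _ S(2) j0]) simp
    also have "(\<Sum>s\<in>Sset a. \<Sum>i\<in>{1..m}. G s i (z1 s i)) = (\<Sum>s\<in>Sset a. \<Sum>i\<in>{1..m}. G s i (z s i)) - G (-a) i0 (z (-a) i0) + G (-a) i0 x'"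
      unfolding z1_def by (rule dsum_upd[OF fS _ S(1) i0]) simp
    finally show ?thesis unfolding z1j x_def by simp
  qed
  have f1: "\<forall>s\<in>Sset a. \<forall>i\<in>{1..m}. 0 \<le> a + \<rho> * z' s i \<and> a + \<rho> * z' s i \<le> 1 \<and> 0 < p s i"
  proof (intro ballI)
    fix s i assume s: "s \<in> Sset a" and i: "i \<in> {1..m}"
    have "z' s i \<in> {L..U}" using feas_facts[OF f s i] x'U y'U unfolding z'_def z1_def by auto
    then show "0 \<le> a + \<rho> * z' s i \<and> a + \<rho> * z' s i \<le> 1 \<and> 0 < p s i"
      using feas_facts[OF f s i] unfolding LU_iff by auto
  qed
  have f2: "\<forall>s\<in>Sset a. (\<Sum>i\<in>{1..m}. p s i) = PS a s" using f unfolding lam_feasible_def by blast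
  have mean0: "(\<Sum>s\<in>Sset a. \<Sum>i\<in>{1..m}. p s i * z s i) = 0" using f unfolding lam_feasible_def by blast
  have mx: "pi * x' + rj * y' = pi * x + rj * y" unfolding x'_def y'_def using pos by (simp add: field_simps)
  have f3: "(\<Sum>s\<in>Sset a. \<Sum>i\<in>{1..m}. p s i * z' s i) = 0"
    using mx upd[of "\<lambda>s i w. p s i * w"] mean0 unfolding pi_def rj_def by simp
  define sec where "sec = (\<Sum>s\<in>Sset a. \<Sum>i\<in>{1..m}. p s i * ((z s i)\<^sup>2 - s * z s i))"
  have sec0: "sec \<le> 0" using f unfolding lam_feasible_def sec_def by blast
  have delta: "pi * ((x')^2 - (-a) * x') - pi * (x^2 - (-a) * x) + rj * ((y')^2 - (1-a) * y') - rj * (y^2 - (1-a) * y)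
      = \<epsilon> * (\<epsilon> * c - g)"
    unfolding x'_def y'_def c_def g_def using pos by (simp add: field_simps power2_eq_square)
  have dneg: "\<epsilon> * (\<epsilon> * c - g) < 0"
  proof -
    have "\<epsilon> * c \<le> g/2" using e(4) c by (simp add: le_divide_eq mult.commute)
    then have "\<epsilon> * c - g < 0" using g by simp
    then show ?thesis using e(1) by (simp add: mult_pos_neg)
  qed
  have sec': "(\<Sum>s\<in>Sset a. \<Sum>i\<in>{1..m}. p s i * ((z' s i)\<^sup>2 - s * z' s i)) = sec + \<epsilon> * (\<epsilon> * c - g)"
    using upd[of "\<lambda>s i w. p s i * (w\<^sup>2 - s * w)"] delta unfolding sec_def pi_def rj_def by simp
  have f4: "(\<Sum>s\<in>Sset a. \<Sum>i\<in>{1..m}. p s i * ((z' s i)\<^sup>2 - s * z' s i)) < 0"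
    using sec' sec0 dneg by simp
  have f': "lam_feasible a \<rho> m z' p" unfolding lam_feasible_def using f1 f2 f3 f4 by auto
  have sp: "pi * \<phi> x + rj * \<phi> y \<le> pi * \<phi> x' + rj * \<phi> y'"
    by (rule spread2[OF x'U y'U x'b(2) _ y'b(2) pos mx]) (use le x_def y_def in simp)
  have "lam_obj \<Phi> a \<rho> m z' p \<ge> lam_obj \<Phi> a \<rho> m z p"
    unfolding lam_obj_def using upd[of "\<lambda>s i w. p s i * \<Phi> (a + \<rho> * w)"] sp unfolding pi_def rj_def \<phi>_def
    by simp
  then have "hobj (hlam m z' p) \<ge> M" using lam2hull(2)[OF f'] vals(4)[OF m opt] by simp
  then have "hcon (hlam m z' p) = 0" using tight lam2hull(1)[OF f'] by simp
  then show False using lam2hull(3)[OF f'] f4 by simp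
qed

lemma exists_interior:
  assumes f: "lam_feasible a \<rho> m z p"
  shows "(\<exists>i\<in>{1..m}. z (-a) i > L) \<and> (\<exists>j\<in>{1..m}. z (1-a) j < U)"
proof (rule ccontr)
  assume "\<not> ?thesis"
  then have cs: "(\<forall>i\<in>{1..m}. z (-a) i \<le> L) \<or> (\<forall>j\<in>{1..m}. z (1-a) j \<ge> U)" by auto
  have S: "-a \<in> Sset a" "1-a \<in> Sset a" by (auto simp: Sset_def)
  have ps: "(\<Sum>i\<in>{1..m}. p (-a) i) = 1 - a" "(\<Sum>i\<in>{1..m}. p (1-a) i) = a"
    using f S unfolding lam_feasible_def by (auto simp: PS_vals)
  have mean: "(\<Sum>i\<in>{1..m}. p (-a) i * z (-a) i) + (\<Sum>i\<in>{1..m}. p (1-a) i * z (1-a) i) = 0"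
    using f unfolding lam_feasible_def sum_Sset by auto
  have LU': "(1-a) * L + a * U = 0" unfolding L_def U_def by (simp add: field_simps)
  have allL: "\<forall>i\<in>{1..m}. z (-a) i = L" and allU: "\<forall>j\<in>{1..m}. z (1-a) j = U"
  proof -
    have A: "\<forall>i\<in>{1..m}. z (-a) i = L" if h: "\<forall>j\<in>{1..m}. z (1-a) j = U"
    proof -
      have "(\<Sum>i\<in>{1..m}. p (1-a) i * z (1-a) i) = a * U" using h ps(2)
        by (simp add: sum_distrib_right[symmetric])
      then have "(\<Sum>i\<in>{1..m}. p (-a) i * (z (-a) i - L)) = 0"
        using mean ps(1) LU' by (simp add: right_diff_distrib sum_subtractf sum_distrib_right[symmetric])
      moreover have nn: "\<forall>i\<in>{1..m}. 0 \<le> p (-a) i * (z (-a) i - L)"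
        using feas_facts[OF f S(1)] by (auto intro!: mult_nonneg_nonneg simp: less_imp_le)
      ultimately have "\<forall>i\<in>{1..m}. p (-a) i * (z (-a) i - L) = 0"
        using sum_nonneg_eq_0_iff[where A="{1..m}" and f="\<lambda>i. p (-a) i * (z (-a) i - L)"] by simp
      then show ?thesis
      proof (intro ballI)
        fix i assume "\<forall>i\<in>{1..m}. p (-a) i * (z (-a) i - L) = 0" and i: "i \<in> {1..m}"
        then have "p (-a) i * (z (-a) i - L) = 0" by blast
        moreover have "p (-a) i > 0" using feas_facts[OF f S(1) i] by simp
        ultimately show "z (-a) i = L" by simp
      qed
    qed
    have B: "\<forall>j\<in>{1..m}. z (1-a) j = U" if h: "\<forall>i\<in>{1..m}. z (-a) i = L"
    proof -
      have "(\<Sum>i\<in>{1..m}. p (-a) i * z (-a) i) = (1-a) * L" using h ps(1)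
        by (simp add: sum_distrib_right[symmetric])
      then have s2: "(\<Sum>i\<in>{1..m}. p (1-a) i * z (1-a) i) = a * U" using mean LU' by linarith
      have "(\<Sum>i\<in>{1..m}. p (1-a) i * (U - z (1-a) i)) = U * (\<Sum>i\<in>{1..m}. p (1-a) i) - (\<Sum>i\<in>{1..m}. p (1-a) i * z (1-a) i)"
        by (simp add: right_diff_distrib sum_subtractf sum_distrib_left mult.commute)
      then have "(\<Sum>i\<in>{1..m}. p (1-a) i * (U - z (1-a) i)) = 0" unfolding s2 ps(2) by simp
      moreover have nn: "\<forall>i\<in>{1..m}. 0 \<le> p (1-a) i * (U - z (1-a) i)"
        using feas_facts[OF f S(2)] by (auto intro!: mult_nonneg_nonneg simp: less_imp_le)
      ultimately have "\<forall>i\<in>{1..m}. p (1-a) i * (U - z (1-a) i) = 0"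
        using sum_nonneg_eq_0_iff[where A="{1..m}" and f="\<lambda>i. p (1-a) i * (U - z (1-a) i)"] by simp
      then show ?thesis
      proof (intro ballI)
        fix i assume "\<forall>i\<in>{1..m}. p (1-a) i * (U - z (1-a) i) = 0" and i: "i \<in> {1..m}"
        then have "p (1-a) i * (U - z (1-a) i) = 0" by blast
        moreover have "p (1-a) i > 0" using feas_facts[OF f S(2) i] by simp
        ultimately show "z (1-a) i = U" by simp
      qed
    qed
    have "(\<forall>i\<in>{1..m}. z (-a) i = L) \<or> (\<forall>j\<in>{1..m}. z (1-a) j = U)"
      using cs feas_facts[OF f S(1)] feas_facts[OF f S(2)] by (meson atLeastAtMost_iff order_antisym)
    then show "\<forall>i\<in>{1..m}. z (-a) i = L" "\<forall>j\<in>{1..m}. z (1-a) j = U" using A B by blast+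
  qed
  have sec: "(\<Sum>s\<in>Sset a. \<Sum>i\<in>{1..m}. p s i * ((z s i)\<^sup>2 - s * z s i)) =
      (1-a) * (L^2 + a * L) + a * (U^2 - (1-a) * U)"
  proof -
    have "(\<Sum>i\<in>{1..m}. p (-a) i * ((z (-a) i)\<^sup>2 - (-a) * z (-a) i)) = (\<Sum>i\<in>{1..m}. p (-a) i) * (L^2 + a * L)"
      using allL by (simp add: sum_distrib_right)
    moreover have "(\<Sum>i\<in>{1..m}. p (1-a) i * ((z (1-a) i)\<^sup>2 - (1-a) * z (1-a) i)) = (\<Sum>i\<in>{1..m}. p (1-a) i) * (U^2 - (1-a) * U)"
      using allU by (simp add: sum_distrib_right)
    ultimately show ?thesis unfolding sum_Sset ps by simp
  qed
  have t1: "L^2 + a * L > 0"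
  proof -
    have "L + a < 0" using r0 r1 a0 unfolding L_def by (simp add: field_simps)
    then have "L * (L + a) > 0" using LU(1) by (simp add: mult_neg_neg)
    then show ?thesis by (simp add: power2_eq_square algebra_simps)
  qed
  have t2: "U^2 - (1-a) * U > 0"
  proof -
    have "(1-\<rho>)*(1-a) > 0" using r1 a1 by simp
    then have "U - (1-a) > 0" using r0 r1 a1 unfolding U_def by (simp add: field_simps algebra_simps)
    then have "U * (U - (1-a)) > 0" using LU(2) by simp
    then show ?thesis by (simp add: power2_eq_square algebra_simps)
  qed
  have "(1-a) * (L^2 + a * L) + a * (U^2 - (1-a) * U) > 0" using t1 t2 a0 a1 by (simp add: add_pos_pos)
  then show False using sec f unfolding lam_feasible_def by simp
qed

lemma part3:
  fixes m :: nat
  assumes m: "3 \<le> m" and opt: "lam_optimal \<Phi> a \<rho> m z p"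
  shows "(\<forall>i\<in>{1..m}. \<forall>j\<in>{1..m}. z (-a) i > -a / \<rho> \<and> z (1 - a) j < (1 - a) / \<rho> \<longrightarrow>
            z (1 - a) j \<ge> z (-a) i + 1 / 2) \<and>
        (\<exists>i\<in>{1..m}. z (-a) i > -a / \<rho>) \<and> (\<exists>j\<in>{1..m}. z (1 - a) j < (1 - a) / \<rho>)"
proof -
  have f: "lam_feasible a \<rho> m z p" using opt unfolding lam_optimal_def by blast
  have "\<forall>i\<in>{1..m}. \<forall>j\<in>{1..m}. z (-a) i > L \<and> z (1 - a) j < U \<longrightarrow> z (1 - a) j \<ge> z (-a) i + 1 / 2"
  proof (intro ballI impI)
    fix i j assume i: "i \<in> {1..m}" and j: "j \<in> {1..m}" and h: "z (-a) i > L \<and> z (1 - a) j < U"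
    show "z (1 - a) j \<ge> z (-a) i + 1 / 2"
    proof (rule ccontr)
      assume "\<not> ?thesis"
      then have lt: "z (1-a) j < z (-a) i + 1/2" by simp
      show False
      proof (cases "z (1-a) j < z (-a) i")
        case True
        then show False using swap_contra[OF m opt i j] by simp
      next
        case False
        then show False using emove_contra[OF m opt i j] h lt by simp
      qed
    qed
  qed
  then show ?thesis using exists_interior[OF f] unfolding L_def U_def by simp
qed

end


lemma dsum_upd2:
  fixes g :: "'a \<Rightarrow> 'b \<Rightarrow> 'c \<Rightarrow> real"
  assumes "finite S" "finite I" "s0 \<in> S" "i0 \<in> I"
  shows "(\<Sum>s\<in>S. \<Sum>i\<in>I. g s i (if s = s0 \<and> i = i0 then c else z s i)) =
         (\<Sum>s\<in>S. \<Sum>i\<in>I. g s i (z s i)) - g s0 i0 (z s0 i0) + g s0 i0 c"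
proof -
  have "(\<Sum>s\<in>S. \<Sum>i\<in>I. g s i (if s = s0 \<and> i = i0 then c else z s i)) =
        (\<Sum>s\<in>S. \<Sum>i\<in>I. g s i (z s i) + (if s = s0 \<and> i = i0 then g s0 i0 c - g s0 i0 (z s0 i0) else 0))"
    by (intro sum.cong refl) auto
  also have "\<dots> = (\<Sum>s\<in>S. \<Sum>i\<in>I. g s i (z s i)) + (\<Sum>s\<in>S. \<Sum>i\<in>I. (if s = s0 \<and> i = i0 then g s0 i0 c - g s0 i0 (z s0 i0) else 0))"
    by (simp add: sum.distrib)
  also have "(\<Sum>s\<in>S. \<Sum>i\<in>I. (if s = s0 \<and> i = i0 then g s0 i0 c - g s0 i0 (z s0 i0) else 0)) =
             (\<Sum>s\<in>S. if s = s0 then g s0 i0 c - g s0 i0 (z s0 i0) else 0)"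
    using assms by (intro sum.cong refl) (auto simp: if_distrib sum.delta)
  also have "\<dots> = g s0 i0 c - g s0 i0 (z s0 i0)" using assms by (simp add: sum.delta)
  finally show ?thesis by simp
qed

lemma partial_quad:
  assumes "\<And>t. F (x(v:=t)) = A + B*t + C*t^2"
  shows "partial F x v = B + 2*C*x v"
proof -
  have e: "(\<lambda>t. F (x(v:=t))) = (\<lambda>t. A + B*t + C*t^2)" using assms by auto
  have "((\<lambda>t. A + B*t + C*t^2) has_field_derivative (B + 2*C*x v)) (at (x v))"
    by (auto intro!: derivative_eq_intros simp: algebra_simps)
  then show ?thesis unfolding partial_def e by (rule DERIV_imp_deriv)
qed

lemma pack_upd:
  "(pack z p)((False,s0,i0):=t) = pack (\<lambda>s i. if s = s0 \<and> i = i0 then t else z s i) p"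
  "(pack z p)((True,s0,i0):=t) = pack z (\<lambda>s i. if s = s0 \<and> i = i0 then t else p s i)"
  by (auto simp: pack_def fun_eq_iff)

lemma pack_apply: "pack z p (False,s,i) = z s i" "pack z p (True,s,i) = p s i"
  by (auto simp: pack_def)

lemma cfun_pack:
  "cfun a \<rho> m (Lo s i) (pack z p) = -(a + \<rho> * z s i)"
  "cfun a \<rho> m (Up s i) (pack z p) = a + \<rho> * z s i - 1"
  "cfun a \<rho> m (EqP s) (pack z p) = (\<Sum>i\<in>{1..m}. p s i) - PS a s"
  "cfun a \<rho> m Mean (pack z p) = (\<Sum>s\<in>Sset a. \<Sum>i\<in>{1..m}. p s i * z s i)"
  "cfun a \<rho> m Second (pack z p) = (\<Sum>s\<in>Sset a. \<Sum>i\<in>{1..m}. p s i * ((z s i)\<^sup>2 - s * z s i))"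
  by (simp_all add: pack_def)

lemma finite_Sset: "finite (Sset a)" by (simp add: Sset_def)

lemma partial_z:
  assumes s0: "s0 \<in> Sset a" and i0: "i0 \<in> {1..m}"
  shows "partial (cfun a \<rho> m k) (pack z p) (False,s0,i0) =
    (case k of Lo s i \<Rightarrow> (if s = s0 \<and> i = i0 then -\<rho> else 0)
     | Up s i \<Rightarrow> (if s = s0 \<and> i = i0 then \<rho> else 0)
     | EqP s \<Rightarrow> 0 | Mean \<Rightarrow> p s0 i0 | Second \<Rightarrow> p s0 i0 * (2 * z s0 i0 - s0))"
proof (cases k)
  case (Lo s i)
  show ?thesis
  proof (cases "s = s0 \<and> i = i0")
    case True
    have "partial (cfun a \<rho> m k) (pack z p) (False,s0,i0) = -\<rho> + 2*0*pack z p (False,s0,i0)"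
      by (rule partial_quad[where A="-a"]) (use True in \<open>simp add: Lo pack_upd cfun_pack pack_apply\<close>)
    then show ?thesis using True Lo by simp
  next
    case False
    have "partial (cfun a \<rho> m k) (pack z p) (False,s0,i0) = 0 + 2*0*pack z p (False,s0,i0)"
      by (rule partial_quad[where A="-(a + \<rho> * z s i)"]) (use False in \<open>auto simp add: Lo pack_upd cfun_pack pack_apply\<close>)
    then show ?thesis using False Lo by auto
  qed
next
  case (Up s i)
  show ?thesis
  proof (cases "s = s0 \<and> i = i0")
    case True
    have "partial (cfun a \<rho> m k) (pack z p) (False,s0,i0) = \<rho> + 2*0*pack z p (False,s0,i0)"
      by (rule partial_quad[where A="a - 1"]) (use True in \<open>simp add: Up pack_upd cfun_pack pack_apply\<close>)
    then show ?thesis using True Up by simp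
  next
    case False
    have "partial (cfun a \<rho> m k) (pack z p) (False,s0,i0) = 0 + 2*0*pack z p (False,s0,i0)"
      by (rule partial_quad[where A="a + \<rho> * z s i - 1"]) (use False in \<open>auto simp add: Up pack_upd cfun_pack pack_apply\<close>)
    then show ?thesis using False Up by auto
  qed
next
  case (EqP s)
  have "partial (cfun a \<rho> m k) (pack z p) (False,s0,i0) = 0 + 2*0*pack z p (False,s0,i0)"
    by (rule partial_quad[where A="(\<Sum>i\<in>{1..m}. p s i) - PS a s"]) (simp add: EqP pack_upd cfun_pack pack_apply)
  then show ?thesis using EqP by simp
next
  case Mean
  have "partial (cfun a \<rho> m k) (pack z p) (False,s0,i0) = p s0 i0 + 2*0*pack z p (False,s0,i0)"
  proof (rule partial_quad[where A="(\<Sum>s\<in>Sset a. \<Sum>i\<in>{1..m}. p s i * z s i) - p s0 i0 * z s0 i0"])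
    fix t
    show "cfun a \<rho> m k ((pack z p)((False, s0, i0) := t)) =
      (\<Sum>s\<in>Sset a. \<Sum>i\<in>{1..m}. p s i * z s i) - p s0 i0 * z s0 i0 + p s0 i0 * t + 0 * t\<^sup>2"
      unfolding Mean pack_upd cfun_pack
      using dsum_upd2[OF finite_Sset finite_atLeastAtMost s0 i0, of "\<lambda>s i w. p s i * w" t z] by simp
  qed
  then show ?thesis using Mean by simp
next
  case Second
  have "partial (cfun a \<rho> m k) (pack z p) (False,s0,i0) = (- p s0 i0 * s0) + 2*(p s0 i0)*pack z p (False,s0,i0)"
  proof (rule partial_quad[where A="(\<Sum>s\<in>Sset a. \<Sum>i\<in>{1..m}. p s i * ((z s i)\<^sup>2 - s * z s i)) - p s0 i0 * ((z s0 i0)\<^sup>2 - s0 * z s0 i0)"])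
    fix t
    show "cfun a \<rho> m k ((pack z p)((False, s0, i0) := t)) =
      (\<Sum>s\<in>Sset a. \<Sum>i\<in>{1..m}. p s i * ((z s i)\<^sup>2 - s * z s i)) - p s0 i0 * ((z s0 i0)\<^sup>2 - s0 * z s0 i0)
       + (- p s0 i0 * s0) * t + p s0 i0 * t\<^sup>2"
      unfolding Second pack_upd cfun_pack
      using dsum_upd2[OF finite_Sset finite_atLeastAtMost s0 i0, of "\<lambda>s i w. p s i * (w\<^sup>2 - s * w)" t z]
      by (simp add: algebra_simps)
  qed
  then show ?thesis using Second by (simp add: pack_apply algebra_simps)
qed

lemma sum_upd1:
  fixes p :: "nat \<Rightarrow> real"
  assumes "finite I" "i0 \<in> I"
  shows "(\<Sum>i\<in>I. if i = i0 then t else p i) = (\<Sum>i\<in>I. p i) - p i0 + t"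
proof -
  have "(\<Sum>i\<in>I. if i = i0 then t else p i) = (\<Sum>i\<in>I. p i + (if i = i0 then t - p i0 else 0))"
    by (rule sum.cong) auto
  also have "\<dots> = (\<Sum>i\<in>I. p i) + (t - p i0)" using assms by (simp add: sum.distrib)
  finally show ?thesis by simp
qed

lemma partial_p:
  assumes s0: "s0 \<in> Sset a" and i0: "i0 \<in> {1..m}"
  shows "partial (cfun a \<rho> m k) (pack z p) (True,s0,i0) =
    (case k of Lo s i \<Rightarrow> 0 | Up s i \<Rightarrow> 0
     | EqP s \<Rightarrow> (if s = s0 then 1 else 0) | Mean \<Rightarrow> z s0 i0 | Second \<Rightarrow> (z s0 i0)\<^sup>2 - s0 * z s0 i0)"
proof (cases k)
  case (Lo s i)
  have "partial (cfun a \<rho> m k) (pack z p) (True,s0,i0) = 0 + 2*0*pack z p (True,s0,i0)"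
    by (rule partial_quad[where A="-(a + \<rho> * z s i)"]) (simp add: Lo pack_upd pack_apply)
  then show ?thesis using Lo by simp
next
  case (Up s i)
  have "partial (cfun a \<rho> m k) (pack z p) (True,s0,i0) = 0 + 2*0*pack z p (True,s0,i0)"
    by (rule partial_quad[where A="a + \<rho> * z s i - 1"]) (simp add: Up pack_upd pack_apply)
  then show ?thesis using Up by simp
next
  case (EqP s)
  show ?thesis
  proof (cases "s = s0")
    case True
    have "partial (cfun a \<rho> m k) (pack z p) (True,s0,i0) = 1 + 2*0*pack z p (True,s0,i0)"
    proof (rule partial_quad[where A="(\<Sum>i\<in>{1..m}. p s i) - p s i0 - PS a s"])
      fix t
      show "cfun a \<rho> m k ((pack z p)((True, s0, i0) := t)) = (\<Sum>i\<in>{1..m}. p s i) - p s i0 - PS a s + 1 * t + 0 * t\<^sup>2"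
        unfolding EqP pack_upd using True sum_upd1[OF finite_atLeastAtMost i0, of t "p s0"]
        by (simp add: pack_apply)
    qed
    then show ?thesis using True EqP by simp
  next
    case False
    have "partial (cfun a \<rho> m k) (pack z p) (True,s0,i0) = 0 + 2*0*pack z p (True,s0,i0)"
      by (rule partial_quad[where A="(\<Sum>i\<in>{1..m}. p s i) - PS a s"]) (use False in \<open>simp add: EqP pack_upd pack_apply\<close>)
    then show ?thesis using False EqP by simp
  qed
next
  case Mean
  have "partial (cfun a \<rho> m k) (pack z p) (True,s0,i0) = z s0 i0 + 2*0*pack z p (True,s0,i0)"
  proof (rule partial_quad[where A="(\<Sum>s\<in>Sset a. \<Sum>i\<in>{1..m}. p s i * z s i) - p s0 i0 * z s0 i0"])
    fix t
    show "cfun a \<rho> m k ((pack z p)((True, s0, i0) := t)) =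
      (\<Sum>s\<in>Sset a. \<Sum>i\<in>{1..m}. p s i * z s i) - p s0 i0 * z s0 i0 + z s0 i0 * t + 0 * t\<^sup>2"
      unfolding Mean pack_upd
      using dsum_upd2[OF finite_Sset finite_atLeastAtMost s0 i0, of "\<lambda>s i w. w * z s i" t p]
      by (simp add: pack_apply algebra_simps)
  qed
  then show ?thesis using Mean by simp
next
  case Second
  have "partial (cfun a \<rho> m k) (pack z p) (True,s0,i0) = ((z s0 i0)\<^sup>2 - s0 * z s0 i0) + 2*0*pack z p (True,s0,i0)"
  proof (rule partial_quad[where A="(\<Sum>s\<in>Sset a. \<Sum>i\<in>{1..m}. p s i * ((z s i)\<^sup>2 - s * z s i)) - p s0 i0 * ((z s0 i0)\<^sup>2 - s0 * z s0 i0)"])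
    fix t
    show "cfun a \<rho> m k ((pack z p)((True, s0, i0) := t)) =
      (\<Sum>s\<in>Sset a. \<Sum>i\<in>{1..m}. p s i * ((z s i)\<^sup>2 - s * z s i)) - p s0 i0 * ((z s0 i0)\<^sup>2 - s0 * z s0 i0)
       + ((z s0 i0)\<^sup>2 - s0 * z s0 i0) * t + 0 * t\<^sup>2"
      unfolding Second pack_upd
      using dsum_upd2[OF finite_Sset finite_atLeastAtMost s0 i0, of "\<lambda>s i w. w * ((z s i)\<^sup>2 - s * z s i)" t p]
      by (simp add: pack_apply algebra_simps)
  qed
  then show ?thesis using Second by simp
qed


context setting begin

lemma act_facts:
  assumes f: "lam_feasible a \<rho> m z p"
  shows "finite (active_constrs a \<rho> m (pack z p))"
    "Mean \<in> active_constrs a \<rho> m (pack z p)"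
    "\<And>s. s \<in> Sset a \<Longrightarrow> EqP s \<in> active_constrs a \<rho> m (pack z p)"
    "(\<Sum>s\<in>Sset a. \<Sum>i\<in>{1..m}. p s i * ((z s i)\<^sup>2 - s * z s i)) = 0 \<Longrightarrow> Second \<in> active_constrs a \<rho> m (pack z p)"
    "\<And>s i. s \<in> Sset a \<Longrightarrow> i \<in> {1..m} \<Longrightarrow> Lo s i \<in> active_constrs a \<rho> m (pack z p) \<longleftrightarrow> z s i = L"
    "\<And>s i. s \<in> Sset a \<Longrightarrow> i \<in> {1..m} \<Longrightarrow> Up s i \<in> active_constrs a \<rho> m (pack z p) \<longleftrightarrow> z s i = U"
    "\<And>k. k \<in> active_constrs a \<rho> m (pack z p) \<Longrightarrow>
       (\<exists>s i. s \<in> Sset a \<and> i \<in> {1..m} \<and> (k = Lo s i \<or> k = Up s i)) \<or> k = Second \<or> k = Mean \<or> (\<exists>s\<in>Sset a. k = EqP s)"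
proof -
  have sub: "active_constrs a \<rho> m (pack z p) \<subseteq>
     (\<lambda>(s,i). Lo s i) ` (Sset a \<times> {1..m}) \<union> (\<lambda>(s,i). Up s i) ` (Sset a \<times> {1..m}) \<union> {Second} \<union> EqP ` Sset a \<union> {Mean}"
    unfolding active_constrs_def inequality_constrs_def equality_constrs_def by auto
  show "finite (active_constrs a \<rho> m (pack z p))"
    by (rule finite_subset[OF sub]) (simp add: finite_Sset)
  show "Mean \<in> active_constrs a \<rho> m (pack z p)" unfolding active_constrs_def equality_constrs_def by simp
  show "\<And>s. s \<in> Sset a \<Longrightarrow> EqP s \<in> active_constrs a \<rho> m (pack z p)"
    unfolding active_constrs_def equality_constrs_def by simp
  show "(\<Sum>s\<in>Sset a. \<Sum>i\<in>{1..m}. p s i * ((z s i)\<^sup>2 - s * z s i)) = 0 \<Longrightarrow> Second \<in> active_constrs a \<rho> m (pack z p)"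
    unfolding active_constrs_def inequality_constrs_def by (simp add: pack_apply)
  show "\<And>s i. s \<in> Sset a \<Longrightarrow> i \<in> {1..m} \<Longrightarrow> Lo s i \<in> active_constrs a \<rho> m (pack z p) \<longleftrightarrow> z s i = L"
  proof -
    fix s i assume "s \<in> Sset a" "i \<in> {1..m}"
    then have "Lo s i \<in> active_constrs a \<rho> m (pack z p) \<longleftrightarrow> a + \<rho> * z s i = 0"
      unfolding active_constrs_def inequality_constrs_def equality_constrs_def by (auto simp: pack_apply)
    also have "\<dots> \<longleftrightarrow> z s i = L" using r0 unfolding L_def by (auto simp: field_simps)
    finally show "Lo s i \<in> active_constrs a \<rho> m (pack z p) \<longleftrightarrow> z s i = L" .
  qed
  show "\<And>s i. s \<in> Sset a \<Longrightarrow> i \<in> {1..m} \<Longrightarrow> Up s i \<in> active_constrs a \<rho> m (pack z p) \<longleftrightarrow> z s i = U"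
  proof -
    fix s i assume "s \<in> Sset a" "i \<in> {1..m}"
    then have "Up s i \<in> active_constrs a \<rho> m (pack z p) \<longleftrightarrow> a + \<rho> * z s i - 1 = 0"
      unfolding active_constrs_def inequality_constrs_def equality_constrs_def by (auto simp: pack_apply)
    also have "\<dots> \<longleftrightarrow> z s i = U" using r0 unfolding U_def by (auto simp: field_simps)
    finally show "Up s i \<in> active_constrs a \<rho> m (pack z p) \<longleftrightarrow> z s i = U" .
  qed
  show "\<And>k. k \<in> active_constrs a \<rho> m (pack z p) \<Longrightarrow>
       (\<exists>s i. s \<in> Sset a \<and> i \<in> {1..m} \<and> (k = Lo s i \<or> k = Up s i)) \<or> k = Second \<or> k = Mean \<or> (\<exists>s\<in>Sset a. k = EqP s)"
    unfolding active_constrs_def inequality_constrs_def equality_constrs_def by auto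
qed

lemma sum_restrict4:
  fixes f :: "constr \<Rightarrow> real"
  assumes "finite A" "\<And>k. k \<notin> T \<Longrightarrow> f k = 0" "finite T"
  shows "(\<Sum>k\<in>A. f k) = (\<Sum>k\<in>T. if k \<in> A then f k else 0)"
proof -
  have "(\<Sum>k\<in>A. f k) = (\<Sum>k\<in>T \<inter> A. f k)"
    by (rule sum.mono_neutral_right) (use assms in auto)
  also have "\<dots> = (\<Sum>k\<in>T. if k \<in> A then f k else 0)" by (rule sum.inter_restrict[OF assms(3)])
  finally show ?thesis .
qed

end

context setting begin

lemma SZ:
  assumes f: "lam_feasible a \<rho> m z p" and s0: "s0 \<in> Sset a" and i0: "i0 \<in> {1..m}"
    and sec: "(\<Sum>s\<in>Sset a. \<Sum>i\<in>{1..m}. p s i * ((z s i)\<^sup>2 - s * z s i)) = 0"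
  shows "(\<Sum>k\<in>active_constrs a \<rho> m (pack z p). c k * partial (cfun a \<rho> m k) (pack z p) (False,s0,i0)) =
    (if z s0 i0 = L then c (Lo s0 i0) * (-\<rho>) else 0) + (if z s0 i0 = U then c (Up s0 i0) * \<rho> else 0)
    + c Mean * p s0 i0 + c Second * (p s0 i0 * (2 * z s0 i0 - s0))"
proof -
  define A where "A = active_constrs a \<rho> m (pack z p)"
  define T where "T = {Lo s0 i0, Up s0 i0, Mean, Second}"
  have fT: "finite T" unfolding T_def by simp
  have z: "\<And>k. k \<notin> T \<Longrightarrow> c k * partial (cfun a \<rho> m k) (pack z p) (False,s0,i0) = 0"
  proof -
    fix k assume "k \<notin> T"
    then show "c k * partial (cfun a \<rho> m k) (pack z p) (False,s0,i0) = 0"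
      unfolding partial_z[OF s0 i0] T_def by (cases k) auto
  qed
  have "(\<Sum>k\<in>A. c k * partial (cfun a \<rho> m k) (pack z p) (False,s0,i0)) =
     (\<Sum>k\<in>T. if k \<in> A then c k * partial (cfun a \<rho> m k) (pack z p) (False,s0,i0) else 0)"
    by (rule sum_restrict4[OF act_facts(1)[OF f, folded A_def] z fT])
  also have "\<dots> = (if z s0 i0 = L then c (Lo s0 i0) * (-\<rho>) else 0) + (if z s0 i0 = U then c (Up s0 i0) * \<rho> else 0)
    + c Mean * p s0 i0 + c Second * (p s0 i0 * (2 * z s0 i0 - s0))"
    unfolding T_def A_def using act_facts(2,4,5,6)[OF f] s0 i0 sec
    by (simp add: partial_z[OF s0 i0])
  finally show ?thesis unfolding A_def .
qed

lemma SP: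
  assumes f: "lam_feasible a \<rho> m z p" and s0: "s0 \<in> Sset a" and i0: "i0 \<in> {1..m}"
    and sec: "(\<Sum>s\<in>Sset a. \<Sum>i\<in>{1..m}. p s i * ((z s i)\<^sup>2 - s * z s i)) = 0"
  shows "(\<Sum>k\<in>active_constrs a \<rho> m (pack z p). c k * partial (cfun a \<rho> m k) (pack z p) (True,s0,i0)) =
    c (EqP s0) + c Mean * z s0 i0 + c Second * ((z s0 i0)\<^sup>2 - s0 * z s0 i0)"
proof -
  define A where "A = active_constrs a \<rho> m (pack z p)"
  define T where "T = {EqP s0, Mean, Second}"
  have fT: "finite T" unfolding T_def by simp
  have z: "\<And>k. k \<notin> T \<Longrightarrow> c k * partial (cfun a \<rho> m k) (pack z p) (True,s0,i0) = 0"
  proof -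
    fix k assume "k \<notin> T"
    then show "c k * partial (cfun a \<rho> m k) (pack z p) (True,s0,i0) = 0"
      unfolding partial_p[OF s0 i0] T_def by (cases k) auto
  qed
  have "(\<Sum>k\<in>A. c k * partial (cfun a \<rho> m k) (pack z p) (True,s0,i0)) =
     (\<Sum>k\<in>T. if k \<in> A then c k * partial (cfun a \<rho> m k) (pack z p) (True,s0,i0) else 0)"
    by (rule sum_restrict4[OF act_facts(1)[OF f, folded A_def] z fT])
  also have "\<dots> = c (EqP s0) + c Mean * z s0 i0 + c Second * ((z s0 i0)\<^sup>2 - s0 * z s0 i0)"
    unfolding T_def A_def using act_facts(2,3,4)[OF f] s0 i0 sec
    by (simp add: partial_p[OF s0 i0])
  finally show ?thesis unfolding A_def .
qed

lemma licq:
  fixes m :: nat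
  assumes m: "3 \<le> m" and opt: "lam_optimal \<Phi> a \<rho> m z p"
  shows "LICQ a \<rho> m (pack z p)"
  unfolding LICQ_def
proof (intro allI impI)
  fix c :: "constr \<Rightarrow> real"
  assume H: "\<forall>v\<in>lam_vars a m. (\<Sum>k\<in>active_constrs a \<rho> m (pack z p). c k * partial (cfun a \<rho> m k) (pack z p) v) = 0"
  have f: "lam_feasible a \<rho> m z p" using opt unfolding lam_optimal_def by blast
  have sec: "(\<Sum>s\<in>Sset a. \<Sum>i\<in>{1..m}. p s i * ((z s i)\<^sup>2 - s * z s i)) = 0" by (rule part2_lam[OF m opt])
  have S: "-a \<in> Sset a" "1-a \<in> Sset a" by (auto simp: Sset_def)
  have LU2: "L \<noteq> U" using LU by simp
  have Hz: "(if z s0 i0 = L then c (Lo s0 i0) * (-\<rho>) else 0) + (if z s0 i0 = U then c (Up s0 i0) * \<rho> else 0)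
    + c Mean * p s0 i0 + c Second * (p s0 i0 * (2 * z s0 i0 - s0)) = 0" if "s0 \<in> Sset a" "i0 \<in> {1..m}" for s0 i0
    using H[rule_format, of "(False,s0,i0)"] SZ[OF f that sec, of c] that unfolding lam_vars_def by simp
  have Hp: "c (EqP s0) + c Mean * z s0 i0 + c Second * ((z s0 i0)\<^sup>2 - s0 * z s0 i0) = 0"
    if "s0 \<in> Sset a" "i0 \<in> {1..m}" for s0 i0
    using H[rule_format, of "(True,s0,i0)"] SP[OF f that sec, of c] that unfolding lam_vars_def by simp
  note P3 = part3[OF m opt, unfolded L_def[symmetric] U_def[symmetric]]
  obtain i0 where i0: "i0 \<in> {1..m}" "z (-a) i0 > L" using P3 by blast
  obtain j0 where j0: "j0 \<in> {1..m}" "z (1-a) j0 < U" using P3 by blast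
  define x where "x = z (-a) i0"
  define y where "y = z (1-a) j0"
  have sep: "y \<ge> x + 1/2" using P3 i0 j0 unfolding x_def y_def by blast
  have xb: "L < x" "x < U" using i0 j0 sep feas_facts(1)[OF f S(2) j0(1)] unfolding x_def y_def by auto
  have yb: "L < y" "y < U" using i0 j0 sep feas_facts(1)[OF f S(1) i0(1)] unfolding x_def y_def by auto
  have pp: "p (-a) i0 > 0" "p (1-a) j0 > 0" using feas_facts(2)[OF f S(1) i0(1)] feas_facts(2)[OF f S(2) j0(1)] by auto
  have e1: "c Mean + c Second * (2 * x + a) = 0"
  proof -
    have "p (-a) i0 * (c Mean + c Second * (2 * x + a)) = 0"
      using Hz[OF S(1) i0(1)] xb LU2 unfolding x_def by (simp add: algebra_simps)
    then show ?thesis using pp by simp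
  qed
  have e2: "c Mean + c Second * (2 * y - (1 - a)) = 0"
  proof -
    have "p (1-a) j0 * (c Mean + c Second * (2 * y - (1 - a))) = 0"
      using Hz[OF S(2) j0(1)] yb LU2 unfolding y_def by (simp add: algebra_simps)
    then show ?thesis using pp by simp
  qed
  have cS: "c Second * (2 * y - 2 * x - 1) = 0" using e1 e2 by (simp add: algebra_simps)
  show "\<forall>k\<in>active_constrs a \<rho> m (pack z p). c k = 0"
  proof (cases "c Second = 0")
    case True
    then have cM: "c Mean = 0" using e1 by simp
    have cE: "c (EqP s) = 0" if "s \<in> Sset a" for s
      using Hp[OF that i0(1)] True cM by simp
    show ?thesis
    proof
      fix k assume k: "k \<in> active_constrs a \<rho> m (pack z p)"
      from act_facts(7)[OF f k] show "c k = 0"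
      proof (elim disjE)
        assume "\<exists>s i. s \<in> Sset a \<and> i \<in> {1..m} \<and> (k = Lo s i \<or> k = Up s i)"
        then obtain s i where si: "s \<in> Sset a" "i \<in> {1..m}" and kk: "k = Lo s i \<or> k = Up s i" by blast
        have h: "(if z s i = L then c (Lo s i) * (-\<rho>) else 0) + (if z s i = U then c (Up s i) * \<rho> else 0) = 0"
          using Hz[OF si] True cM by simp
        from kk show "c k = 0"
        proof
          assume kl: "k = Lo s i"
          then have "z s i = L" using k act_facts(5)[OF f si] by simp
          then show "c k = 0" using h LU2 r0 kl by simp
        next
          assume ku: "k = Up s i"
          then have "z s i = U" using k act_facts(6)[OF f si] by simp
          then show "c k = 0" using h LU2 r0 ku by simp
        qed
      next
        assume "k = Second" then show "c k = 0" using True by simp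
      next
        assume "k = Mean" then show "c k = 0" using cM by simp
      next
        assume "\<exists>s\<in>Sset a. k = EqP s" then show "c k = 0" using cE by auto
      qed
    qed
  next
    case False
    then have yx: "y = x + 1/2" using cS by simp
    have allx: "z (-a) i = x" if i: "i \<in> {1..m}" for i
    proof -
      define w where "w = z (-a) i"
      have h1: "c (EqP (-a)) + c Mean * w + c Second * (w\<^sup>2 - (-a) * w) = 0" using Hp[OF S(1) i] unfolding w_def .
      have h2: "c (EqP (-a)) + c Mean * x + c Second * (x\<^sup>2 - (-a) * x) = 0" using Hp[OF S(1) i0(1)] unfolding x_def .
      have "c Second * (w - x)^2 = (c (EqP (-a)) + c Mean * w + c Second * (w\<^sup>2 - (-a) * w))
          - (c (EqP (-a)) + c Mean * x + c Second * (x\<^sup>2 - (-a) * x)) - (c Mean + c Second * (2 * x + a)) * (w - x)"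
        by (simp add: algebra_simps power2_eq_square)
      also have "\<dots> = 0" using h1 h2 e1 by simp
      finally have "(w - x)^2 = 0" using False by simp
      then show ?thesis unfolding w_def by simp
    qed
    have ally: "z (1-a) i = y" if i: "i \<in> {1..m}" for i
    proof -
      define w where "w = z (1-a) i"
      have h1: "c (EqP (1-a)) + c Mean * w + c Second * (w\<^sup>2 - (1-a) * w) = 0" using Hp[OF S(2) i] unfolding w_def .
      have h2: "c (EqP (1-a)) + c Mean * y + c Second * (y\<^sup>2 - (1-a) * y) = 0" using Hp[OF S(2) j0(1)] unfolding y_def .
      have "c Second * (w - y)^2 = (c (EqP (1-a)) + c Mean * w + c Second * (w\<^sup>2 - (1-a) * w))
          - (c (EqP (1-a)) + c Mean * y + c Second * (y\<^sup>2 - (1-a) * y)) - (c Mean + c Second * (2 * y - (1-a))) * (w - y)"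
        by (simp add: algebra_simps power2_eq_square)
      also have "\<dots> = 0" using h1 h2 e2 by simp
      finally have "(w - y)^2 = 0" using False by simp
      then show ?thesis unfolding w_def by simp
    qed
    have ps: "(\<Sum>i\<in>{1..m}. p (-a) i) = 1 - a" "(\<Sum>i\<in>{1..m}. p (1-a) i) = a"
      using f S unfolding lam_feasible_def by (auto simp: PS_vals)
    have g: "(\<Sum>i\<in>{1..m}. p (-a) i * G (z (-a) i)) = (1-a) * G x"
      "(\<Sum>i\<in>{1..m}. p (1-a) i * G (z (1-a) i)) = a * G y" for G :: "real \<Rightarrow> real"
    proof -
      have "(\<Sum>i\<in>{1..m}. p (-a) i * G (z (-a) i)) = (\<Sum>i\<in>{1..m}. p (-a) i) * G x"
        unfolding sum_distrib_right using allx by (intro sum.cong) auto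
      then show "(\<Sum>i\<in>{1..m}. p (-a) i * G (z (-a) i)) = (1-a) * G x" using ps by simp
      have "(\<Sum>i\<in>{1..m}. p (1-a) i * G (z (1-a) i)) = (\<Sum>i\<in>{1..m}. p (1-a) i) * G y"
        unfolding sum_distrib_right using ally by (intro sum.cong) auto
      then show "(\<Sum>i\<in>{1..m}. p (1-a) i * G (z (1-a) i)) = a * G y" using ps by simp
    qed
    have mean: "(1-a) * x + a * y = 0"
      using f g[of "\<lambda>w. w"] unfolding lam_feasible_def sum_Sset by simp
    have sec2: "(1-a) * (x\<^sup>2 - (-a) * x) + a * (y\<^sup>2 - (1-a) * y) = 0"
      using sec g[of "\<lambda>w. w\<^sup>2 - (-a) * w"] g[of "\<lambda>w. w\<^sup>2 - (1-a) * w"] unfolding sum_Sset by simp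
    have xv: "x = -a/2" using mean yx by (simp add: algebra_simps)
    have yv: "y = (1-a)/2" using xv yx by simp
    have "(1-a) * (x\<^sup>2 - (-a) * x) + a * (y\<^sup>2 - (1-a) * y) = - (a * (1-a)) / 4"
      unfolding xv yv by (simp add: field_simps power2_eq_square)
    moreover have "a * (1-a) > 0" using a0 a1 by simp
    ultimately have False using sec2 a0 a1 by simp
    then show ?thesis ..
  qed
qed
end


theorem proposition2p2:
  fixes \<Phi> :: "real \<Rightarrow> real" and a \<rho> :: real and m :: nat
  assumes cont: "continuous_on {0..1} \<Phi>"
    and sconv: "strictly_convex_on {0..1} \<Phi>"
    and a: "0 < a" "a < 1"
    and rho: "0 < \<rho>" "\<rho> < 1"
    and m: "3 \<le> m"
  shows
    \<comment> \<open>1) the maximum defining Lambda^(m) is attained and equals Gamma\<close>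
    "((\<exists>z p. lam_optimal \<Phi> a \<rho> m z p) \<and> Lambda \<Phi> a \<rho> m = Gamma \<Phi> a \<rho> \<and>
      (\<forall>z p. lam_optimal \<Phi> a \<rho> m z p \<longrightarrow> lam_obj \<Phi> a \<rho> m z p = Gamma \<Phi> a \<rho>))
   \<and> \<comment> \<open>2) optimal solutions satisfy E[Z^2] = E[SZ]\<close>
     (\<forall>Q. gamma_optimal \<Phi> a \<rho> Q \<longrightarrow> jointE a Q (\<lambda>s z. z\<^sup>2) = jointE a Q (\<lambda>s z. s * z))
   \<and> (\<forall>z p. lam_optimal \<Phi> a \<rho> m z p \<longrightarrow>
        (\<Sum>s\<in>Sset a. \<Sum>i\<in>{1..m}. p s i * ((z s i)\<^sup>2 - s * z s i)) = 0)
   \<and> \<comment> \<open>3) separation of interior points\<close>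
     (\<forall>z p. lam_optimal \<Phi> a \<rho> m z p \<longrightarrow>
        (\<forall>i\<in>{1..m}. \<forall>j\<in>{1..m}. z (-a) i > -a / \<rho> \<and> z (1 - a) j < (1 - a) / \<rho> \<longrightarrow>
            z (1 - a) j \<ge> z (-a) i + 1 / 2) \<and>
        (\<exists>i\<in>{1..m}. z (-a) i > -a / \<rho>) \<and> (\<exists>j\<in>{1..m}. z (1 - a) j < (1 - a) / \<rho>))
   \<and> \<comment> \<open>4) LICQ at every optimal solution\<close>
     (\<forall>z p. lam_optimal \<Phi> a \<rho> m z p \<longrightarrow> LICQ a \<rho> m (pack z p))"
proof -
  interpret setting \<Phi> a \<rho>
    by (rule setting.intro) (use cont sconv a rho in auto)
  have p1: "(\<exists>z p. lam_optimal \<Phi> a \<rho> m z p) \<and> Lambda \<Phi> a \<rho> m = Gamma \<Phi> a \<rho> \<and>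
      (\<forall>z p. lam_optimal \<Phi> a \<rho> m z p \<longrightarrow> lam_obj \<Phi> a \<rho> m z p = Gamma \<Phi> a \<rho>)"
    using vals[OF m] by auto
  have p2: "\<forall>Q. gamma_optimal \<Phi> a \<rho> Q \<longrightarrow> jointE a Q (\<lambda>s z. z\<^sup>2) = jointE a Q (\<lambda>s z. s * z)"
    using part2_gamma[OF m] by blast
  have p2': "\<forall>z p. lam_optimal \<Phi> a \<rho> m z p \<longrightarrow>
        (\<Sum>s\<in>Sset a. \<Sum>i\<in>{1..m}. p s i * ((z s i)\<^sup>2 - s * z s i)) = 0"
    using part2_lam[OF m] by blast
  have p3: "\<forall>z p. lam_optimal \<Phi> a \<rho> m z p \<longrightarrow>
        (\<forall>i\<in>{1..m}. \<forall>j\<in>{1..m}. z (-a) i > -a / \<rho> \<and> z (1 - a) j < (1 - a) / \<rho> \<longrightarrow>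
            z (1 - a) j \<ge> z (-a) i + 1 / 2) \<and>
        (\<exists>i\<in>{1..m}. z (-a) i > -a / \<rho>) \<and> (\<exists>j\<in>{1..m}. z (1 - a) j < (1 - a) / \<rho>)"
    using part3[OF m] by blast
  have p4: "\<forall>z p. lam_optimal \<Phi> a \<rho> m z p \<longrightarrow> LICQ a \<rho> m (pack z p)"
    using licq[OF m] by blast
  show ?thesis using p1 p2 p2' p3 p4 by blast
qed

end
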